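(* Let $N\ge 2$ and let $p\ge 3$ be odd. Let $\Lambda=\Lambda^\bullet(\mathbb{C}^{N\times N})$ be the exterior algebra on the $N^2$ odd generators $\Psi_{ij}$ ($1\le i,j\le N$), and let $\Psi$ denote the $N\times N$ matrix with entries $\Psi_{ij}$. Set $\chi:=\frac{1}{\sqrt N}\sum_{i=1}^N\Psi_{ii}$ and $A:=\Psi-\frac{\chi}{\sqrt N}\mathbf 1$, so that $\mathrm{Tr}A=0$ and $\Psi=A+\frac{\chi}{\sqrt N}\mathbf 1$. Then \[ \mathrm{Tr}(\Psi^p)=\mathrm{Tr}(A^p) \] in $\Lambda$. Consequently, writing $\Lambda=\Lambda^\bullet(\chi)\otimes\Lambda^\bullet(\mathfrak{sl}_N)$, where $\Lambda^\bullet(\mathfrak{sl}_N)$ is the exterior subalgebra generated by the traceless linear combinations of the $\Psi_{ij}$ (which contains all entries of $A$), the cochain complex $(\Lambda,\,Q_p)$ with $Q_p(v)=\mathrm{Tr}(\Psi^p)\wedge v$ splits as the tensor product of $\Lambda^\bullet(\chi)$ (with zero differential) and the complex $(\Lambda^\bullet(\mathfrak{sl}_N),\,\mathrm{Tr}(A^p)\wedge\,\cdot\,)$, and the BPS generating function satisfies $Z_{\mathrm{BPS}}(x)=(1+x)\,Z_{\mathrm{red}}(x)$, where $Z_{\mathrm{red}}(x)=\sum_R \dim H^R_{\mathrm{red}}\,x^R$ is the generating function of the cohomology of the traceless complex.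
   Context: Since $Q_p$ raises exterior degree by $p$ and $Q_p^2=0$, for each $R$ one has maps $Q_R:\Lambda^R\to\Lambda^{R+p}$ and the degree-$R$ cohomology $H^R=\ker Q_R/\operatorname{im}Q_{R-p}$ (with $Q_{R-p}=0$ for $R<p$). The BPS generating function is $Z_{\mathrm{BPS}}(x)=\sum_{R=0}^{N^2}h_Rx^R$ with $h_R=\dim H^R$; $h_R$ equals the number of zero-energy states of $H=\{Q_p,Q_p^\dagger\}$ in fermion number $R$. The cohomology of the traceless complex is defined in the same way with $\Lambda^\bullet(\mathfrak{sl}_N)$ and $\mathrm{Tr}(A^p)$ in place of $\Lambda$ and $\mathrm{Tr}(\Psi^p)$. *)

theory Defs
  imports "HOL-Analysis.Analysis" "HOL-Computational_Algebra.Polynomial" "HOL-Library.Function_Algebras"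
begin

text \<open>Generators are indexed by pairs (i,j) with i,j < N (0-based).
  An element of the exterior algebra is a coefficient function on finite sets
  of generators: f S is the coefficient of the monomial e_S = Psi_{s1} ^ ... ^ Psi_{sk},
  where s1 < ... < sk in the lexicographic order on pairs.\<close>

type_synonym gen = "nat \<times> nat"
type_synonym ext = "gen set \<Rightarrow> complex"

definition gens :: "nat \<Rightarrow> gen set" where
  "gens N = {0..<N} \<times> {0..<N}"

definition gen_less :: "gen \<Rightarrow> gen \<Rightarrow> bool" where
  "gen_less a b \<longleftrightarrow> fst a < fst b \<or> (fst a = fst b \<and> snd a < snd b)"

text \<open>Sign of e_S ^ e_T = sign * e_(S \<union> T) for disjoint S, T.\<close>
definition wsign :: "gen set \<Rightarrow> gen set \<Rightarrow> complex" where
  "wsign S T = (-1) ^ card {(s,t). s \<in> S \<and> t \<in> T \<and> gen_less t s}"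

definition ext_zero :: ext where "ext_zero = (\<lambda>S. 0)"
definition ext_one :: ext where "ext_one = (\<lambda>S. if S = {} then 1 else 0)"
definition ext_add :: "ext \<Rightarrow> ext \<Rightarrow> ext" where "ext_add f g = (\<lambda>S. f S + g S)"
definition ext_scale :: "complex \<Rightarrow> ext \<Rightarrow> ext" where "ext_scale c f = (\<lambda>S. c * f S)"
definition ext_diff :: "ext \<Rightarrow> ext \<Rightarrow> ext" where "ext_diff f g = (\<lambda>S. f S - g S)"

definition wedge :: "ext \<Rightarrow> ext \<Rightarrow> ext" where
  "wedge f g = (\<lambda>U. if finite U then (\<Sum>S\<in>Pow U. wsign S (U - S) * f S * g (U - S)) else 0)"

definition ext_sum :: "'i set \<Rightarrow> ('i \<Rightarrow> ext) \<Rightarrow> ext" where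
  "ext_sum I F = (\<lambda>S. \<Sum>i\<in>I. F i S)"

definition Lam :: "nat \<Rightarrow> ext set" where
  "Lam N = {f. \<forall>S. f S \<noteq> 0 \<longrightarrow> S \<subseteq> gens N}"

definition Lam_deg :: "nat \<Rightarrow> nat \<Rightarrow> ext set" where
  "Lam_deg N R = {f \<in> Lam N. \<forall>S. f S \<noteq> 0 \<longrightarrow> card S = R}"

definition Psi :: "nat \<Rightarrow> nat \<Rightarrow> ext" where
  "Psi i j = (\<lambda>S. if S = {(i,j)} then 1 else 0)"

type_synonym emat = "nat \<Rightarrow> nat \<Rightarrow> ext"

definition mmul :: "nat \<Rightarrow> emat \<Rightarrow> emat \<Rightarrow> emat" where
  "mmul N X Y = (\<lambda>i j. ext_sum {0..<N} (\<lambda>k. wedge (X i k) (Y k j)))"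

definition mid :: emat where
  "mid = (\<lambda>i j. if i = j then ext_one else ext_zero)"

fun mpow :: "nat \<Rightarrow> emat \<Rightarrow> nat \<Rightarrow> emat" where
  "mpow N X 0 = mid"
| "mpow N X (Suc n) = mmul N (mpow N X n) X"

definition mtrace :: "nat \<Rightarrow> emat \<Rightarrow> ext" where
  "mtrace N X = ext_sum {0..<N} (\<lambda>i. X i i)"

definition chi :: "nat \<Rightarrow> ext" where
  "chi N = ext_scale (1 / complex_of_real (sqrt (real N))) (ext_sum {0..<N} (\<lambda>i. Psi i i))"

definition Amat :: "nat \<Rightarrow> emat" where
  "Amat N = (\<lambda>i j. if i = j
      then ext_diff (Psi i j) (ext_scale (1 / complex_of_real (sqrt (real N))) (chi N))
      else Psi i j)"

definition TrPsi :: "nat \<Rightarrow> nat \<Rightarrow> ext" where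
  "TrPsi N p = mtrace N (mpow N Psi p)"

definition TrA :: "nat \<Rightarrow> nat \<Rightarrow> ext" where
  "TrA N p = mtrace N (mpow N (Amat N) p)"

definition sl_lin :: "nat \<Rightarrow> ext set" where
  "sl_lin N = {f. (\<forall>S. f S \<noteq> 0 \<longrightarrow> (\<exists>g\<in>gens N. S = {g})) \<and> (\<Sum>i<N. f {(i,i)}) = 0}"

fun wedge_list :: "ext list \<Rightarrow> ext" where
  "wedge_list [] = ext_one"
| "wedge_list (f # fs) = wedge f (wedge_list fs)"

definition sl_deg :: "nat \<Rightarrow> nat \<Rightarrow> ext set" where
  "sl_deg N R = module.span ext_scale
     {wedge_list fs | fs. length fs = R \<and> set fs \<subseteq> sl_lin N}"

definition cdim :: "ext set \<Rightarrow> nat" where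
  "cdim V = vector_space.dim ext_scale V"

text \<open>dim H^R of the complex (C_R, w ^ -) with w of degree p:
  dim ker(Q_R) - dim im(Q_{R-p}), with Q_{R-p} = 0 for R < p.\<close>
definition coh_dim :: "(nat \<Rightarrow> ext set) \<Rightarrow> ext \<Rightarrow> nat \<Rightarrow> nat \<Rightarrow> nat" where
  "coh_dim C w p R =
     cdim {v \<in> C R. wedge w v = ext_zero}
     - (if R < p then 0 else cdim (wedge w ` C (R - p)))"

definition h_BPS :: "nat \<Rightarrow> nat \<Rightarrow> nat \<Rightarrow> nat" where
  "h_BPS N p R = coh_dim (Lam_deg N) (TrPsi N p) p R"

definition h_red :: "nat \<Rightarrow> nat \<Rightarrow> nat \<Rightarrow> nat" where
  "h_red N p R = coh_dim (sl_deg N) (TrA N p) p R"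

definition Z_BPS :: "nat \<Rightarrow> nat \<Rightarrow> nat poly" where
  "Z_BPS N p = (\<Sum>R\<le>N^2. monom (h_BPS N p R) R)"

definition Z_red :: "nat \<Rightarrow> nat \<Rightarrow> nat poly" where
  "Z_red N p = (\<Sum>R\<le>N^2. monom (h_red N p R) R)"

end

theory Submission
  imports Defs
begin

lemma fun_sum_apply: "(\<Sum>i\<in>I. F i) (S::'b) = (\<Sum>i\<in>I. F i S)"
  by (induction I rule: infinite_finite_induct) auto

lemma ext_add_eq: "ext_add f g = f + g" by (auto simp: ext_add_def fun_eq_iff)
lemma ext_zero_eq: "ext_zero = 0" by (auto simp: ext_zero_def fun_eq_iff)
lemma ext_diff_eq: "ext_diff f g = f - g" by (auto simp: ext_diff_def fun_eq_iff)
lemma ext_sum_eq: "ext_sum I F = (\<Sum>i\<in>I. F i)" by (auto simp: ext_sum_def fun_eq_iff fun_sum_apply)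

interpretation E: vector_space ext_scale
  by unfold_locales (auto simp: ext_scale_def fun_eq_iff algebra_simps)

lemma ext_scale_apply[simp]: "ext_scale c f S = c * f S" by (simp add: ext_scale_def)

definition invs :: "gen set \<Rightarrow> gen set \<Rightarrow> (gen \<times> gen) set" where
  "invs S T = {(s,t). s \<in> S \<and> t \<in> T \<and> gen_less t s}"

lemma wsign_invs: "wsign S T = (-1) ^ card (invs S T)"
  by (simp add: wsign_def invs_def)

lemma finite_invs: "finite S \<Longrightarrow> finite T \<Longrightarrow> finite (invs S T)"
  by (rule finite_subset[of _ "S \<times> T"]) (auto simp: invs_def)

lemma gen_less_total: "a \<noteq> b \<Longrightarrow> gen_less a b \<or> gen_less b a"
  by (cases a; cases b) (auto simp: gen_less_def)
lemma gen_less_asym: "gen_less a b \<Longrightarrow> \<not> gen_less b a"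
  by (auto simp: gen_less_def)
lemma gen_less_irrefl: "\<not> gen_less a a"
  by (auto simp: gen_less_def)

lemma wsign_Un_left:
  assumes "S \<inter> T = {}" "finite S" "finite T" "finite V"
  shows "wsign (S \<union> T) V = wsign S V * wsign T V"
proof -
  have "invs (S \<union> T) V = invs S V \<union> invs T V" by (auto simp: invs_def)
  moreover have "invs S V \<inter> invs T V = {}" using assms(1) by (auto simp: invs_def)
  ultimately have "card (invs (S \<union> T) V) = card (invs S V) + card (invs T V)"
    using assms by (simp add: card_Un_disjoint finite_invs)
  thus ?thesis by (simp add: wsign_invs power_add)
qed

lemma wsign_Un_right:
  assumes "T \<inter> V = {}" "finite S" "finite T" "finite V"
  shows "wsign S (T \<union> V) = wsign S T * wsign S V"
proof -
  have "invs S (T \<union> V) = invs S T \<union> invs S V" by (auto simp: invs_def)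
  moreover have "invs S T \<inter> invs S V = {}" using assms(1) by (auto simp: invs_def)
  ultimately have "card (invs S (T \<union> V)) = card (invs S T) + card (invs S V)"
    using assms by (simp add: card_Un_disjoint finite_invs)
  thus ?thesis by (simp add: wsign_invs power_add)
qed

lemma wsign_swap:
  assumes "S \<inter> T = {}" "finite S" "finite T"
  shows "wsign S T * wsign T S = (-1) ^ (card S * card T)"
proof -
  have e: "S \<times> T = invs S T \<union> (\<lambda>(a,b). (b,a)) ` invs T S"
  proof (intro equalityI subsetI)
    fix x assume "x \<in> S \<times> T"
    then obtain s t where x: "x = (s,t)" "s \<in> S" "t \<in> T" by blast
    then have "s \<noteq> t" using assms(1) by blast
    then consider "gen_less t s" | "gen_less s t" using gen_less_total by blast
    then show "x \<in> invs S T \<union> (\<lambda>(a,b). (b,a)) ` invs T S"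
    proof cases
      case 1 then show ?thesis using x by (simp add: invs_def)
    next
      case 2 then have "(t,s) \<in> invs T S" using x by (simp add: invs_def)
      then show ?thesis using x by (auto simp: image_iff intro!: bexI[of _ "(t,s)"])
    qed
  qed (auto simp: invs_def)
  have d: "invs S T \<inter> (\<lambda>(a,b). (b,a)) ` invs T S = {}"
    using gen_less_asym by (auto simp: invs_def)
  have i: "inj_on (\<lambda>(a,b). (b,a)) (invs T S)" by (auto simp: inj_on_def)
  have "card S * card T = card (S \<times> T)" by (simp add: card_cartesian_product)
  also have "\<dots> = card (invs S T) + card (invs T S)"
    using card_Un_disjoint[OF finite_invs finite_imageI[OF finite_invs] d] assms
      card_image[OF i] by (subst e) simp
  finally have "card S * card T = card (invs S T) + card (invs T S)" .
  thus ?thesis by (simp add: wsign_invs power_add)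
qed

lemma wsign_sq: "wsign S T * wsign S T = 1"
  by (simp add: wsign_def power_mult_distrib[symmetric] flip: power_add mult_2)

lemma wsign_nz: "wsign S T \<noteq> 0" by (simp add: wsign_def)

lemma wsign_empty1[simp]: "wsign {} T = 1" by (simp add: wsign_def)
lemma wsign_empty2[simp]: "wsign S {} = 1" by (simp add: wsign_def)

lemma wedge_add_left: "wedge (f + g) h = wedge f h + wedge g h"
  by (auto simp: wedge_def fun_eq_iff algebra_simps sum.distrib)
lemma wedge_add_right: "wedge h (f + g) = wedge h f + wedge h g"
  by (auto simp: wedge_def fun_eq_iff algebra_simps sum.distrib)
lemma wedge_scale_left: "wedge (ext_scale c f) g = ext_scale c (wedge f g)"
  by (auto simp: wedge_def fun_eq_iff algebra_simps sum_distrib_left)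
lemma wedge_scale_right: "wedge g (ext_scale c f) = ext_scale c (wedge g f)"
  by (auto simp: wedge_def fun_eq_iff algebra_simps sum_distrib_left)
lemma wedge_zero_left[simp]: "wedge 0 g = 0"
  by (auto simp: wedge_def fun_eq_iff)
lemma wedge_zero_right[simp]: "wedge g 0 = 0"
  by (auto simp: wedge_def fun_eq_iff)
lemma wedge_uminus_left: "wedge (- f) g = - wedge f g"
  by (auto simp: wedge_def fun_eq_iff sum_negf)
lemma wedge_uminus_right: "wedge g (- f) = - wedge g f"
  by (auto simp: wedge_def fun_eq_iff sum_negf)
lemma wedge_diff_left: "wedge (f - g) h = wedge f h - wedge g h"
  by (auto simp: wedge_def fun_eq_iff algebra_simps sum_subtractf)
lemma wedge_diff_right: "wedge h (f - g) = wedge h f - wedge h g"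
  by (auto simp: wedge_def fun_eq_iff algebra_simps sum_subtractf)
lemma wedge_sum_left: "wedge (\<Sum>i\<in>I. F i) g = (\<Sum>i\<in>I. wedge (F i) g)"
proof (cases "finite I")
  case True thus ?thesis
  proof (induction I rule: finite_induct)
    case (insert x Fa) thus ?case by (simp only: sum.insert[OF insert(1,2)] wedge_add_left insert(3))
  qed (simp only: sum.empty wedge_zero_left)
qed simp
lemma wedge_sum_right: "wedge g (\<Sum>i\<in>I. F i) = (\<Sum>i\<in>I. wedge g (F i))"
proof (cases "finite I")
  case True thus ?thesis
  proof (induction I rule: finite_induct)
    case (insert x Fa) thus ?case by (simp only: sum.insert[OF insert(1,2)] wedge_add_right insert(3))
  qed (simp only: sum.empty wedge_zero_right)
qed simp

lemma key_sign:
  assumes fin: "finite U" and that: "S \<subseteq> U" "R \<subseteq> S"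
  shows "wsign R (U-R) * wsign (S-R) (U-S) = wsign S (U-S) * wsign R (S-R)"
proof -
  have fS: "finite S" "finite R" using that fin by (auto intro: finite_subset)
  have e2: "(S - R) \<union> (U - S) = U - R" using that by auto
  have e3: "R \<union> (S - R) = S" using that by auto
  have s1: "wsign R ((S - R) \<union> (U - S)) = wsign R (S-R) * wsign R (U-S)"
    using fS fin by (intro wsign_Un_right) auto
  have s2: "wsign (R \<union> (S - R)) (U-S) = wsign R (U-S) * wsign (S-R) (U-S)"
    using fS fin by (intro wsign_Un_left) auto
  show ?thesis using s1 s2 unfolding e2 e3 by simp
qed

lemma wedge_assoc: "wedge (wedge f g) h = wedge f (wedge g h)"
proof (rule ext)
  fix U :: "gen set"
  show "wedge (wedge f g) h U = wedge f (wedge g h) U"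
  proof (cases "finite U")
    case False thus ?thesis by (simp add: wedge_def)
  next
    case fin: True
    have L: "wedge (wedge f g) h U = (\<Sum>S\<in>Pow U. \<Sum>R\<in>Pow S.
        wsign S (U-S) * (wsign R (S-R) * f R * g (S-R)) * h (U-S))"
      using fin by (auto simp: wedge_def sum_distrib_left sum_distrib_right
          intro!: sum.cong dest: finite_subset)
    also have "\<dots> = (\<Sum>(S,R)\<in>Sigma (Pow U) Pow.
        wsign S (U-S) * (wsign R (S-R) * f R * g (S-R)) * h (U-S))"
      using fin by (subst sum.Sigma) (auto dest: finite_subset)
    finally have L': "wedge (wedge f g) h U = \<dots>" .
    have R: "wedge f (wedge g h) U = (\<Sum>R\<in>Pow U. \<Sum>T\<in>Pow (U-R).
        wsign R (U-R) * f R * (wsign T (U-R-T) * g T * h (U-R-T)))"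
      using fin by (auto simp: wedge_def sum_distrib_left sum_distrib_right
          intro!: sum.cong dest: finite_subset)
    also have "\<dots> = (\<Sum>(R,T)\<in>Sigma (Pow U) (\<lambda>R. Pow (U-R)).
        wsign R (U-R) * f R * (wsign T (U-R-T) * g T * h (U-R-T)))"
      using fin by (subst sum.Sigma) (auto dest: finite_subset)
    finally have R': "wedge f (wedge g h) U = \<dots>" .
    have key: "wsign R (U-R) * f R * (wsign (S-R) (U-R-(S-R)) * g (S-R) * h (U-R-(S-R)))
        = wsign S (U-S) * (wsign R (S-R) * f R * g (S-R)) * h (U-S)"
      if "S \<subseteq> U" "R \<subseteq> S" for S R
    proof -
      have e1: "U - R - (S - R) = U - S" using that by auto
      show ?thesis unfolding e1 using key_sign[OF fin that]
        by (simp add: algebra_simps)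
    qed
    show ?thesis unfolding L' R'
    proof (rule sum.reindex_bij_witness[where i="\<lambda>(R,T). (R \<union> T, R)" and j="\<lambda>(S,R). (R, S-R)"])
      fix a assume "a \<in> Sigma (Pow U) Pow"
      then obtain S R where a: "a = (S,R)" "S \<subseteq> U" "R \<subseteq> S" by auto
      show "(\<lambda>(R,T). (R \<union> T, R)) ((\<lambda>(S,R). (R, S-R)) a) = a" using a by (simp add: Un_absorb1)
      show "(\<lambda>(S,R). (R, S-R)) a \<in> (SIGMA R:Pow U. Pow (U - R))" using a by auto
      show "(case (\<lambda>(S,R). (R, S-R)) a of (R, T) \<Rightarrow> wsign R (U - R) * f R * (wsign T (U - R - T) * g T * h (U - R - T))) =
         (case a of (S, R) \<Rightarrow> wsign S (U - S) * (wsign R (S - R) * f R * g (S - R)) * h (U - S))"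
        unfolding a(1) using key[OF a(2,3)] by (simp only: prod.case)
    next
      fix b assume "b \<in> (SIGMA R:Pow U. Pow (U - R))"
      then obtain R T where b: "b = (R,T)" "R \<subseteq> U" "T \<subseteq> U - R" by auto
      show "(\<lambda>(S,R). (R, S-R)) ((\<lambda>(R,T). (R \<union> T, R)) b) = b" using b by auto
      show "(\<lambda>(R,T). (R \<union> T, R)) b \<in> Sigma (Pow U) Pow" using b by auto
    qed
  qed
qed

definition fsupp :: "ext \<Rightarrow> bool" where "fsupp f \<longleftrightarrow> (\<forall>U. infinite U \<longrightarrow> f U = 0)"
definition hom :: "nat \<Rightarrow> ext \<Rightarrow> bool" where
  "hom d f \<longleftrightarrow> (\<forall>S. f S \<noteq> 0 \<longrightarrow> finite S \<and> card S = d)"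

lemma hom_fs: "hom d f \<Longrightarrow> fsupp f" by (auto simp: hom_def fsupp_def)
lemma wedge_fs[simp]: "fsupp (wedge f g)" by (simp add: fsupp_def wedge_def)

lemma wedge_one_left: "fsupp f \<Longrightarrow> wedge ext_one f = f"
proof (rule ext)
  fix U assume f: "fsupp f"
  show "wedge ext_one f U = f U"
  proof (cases "finite U")
    case True
    have "wedge ext_one f U = (\<Sum>S\<in>Pow U. wsign S (U-S) * ext_one S * f (U-S))"
      using True by (simp add: wedge_def)
    also have "\<dots> = (\<Sum>S\<in>Pow U. if S = {} then f U else 0)"
      by (rule sum.cong) (auto simp: ext_one_def)
    also have "\<dots> = f U" using True by (subst sum.delta) auto
    finally show ?thesis .
  qed (use f in \<open>auto simp: wedge_def fsupp_def\<close>)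
qed

lemma wedge_one_right: "fsupp f \<Longrightarrow> wedge f ext_one = f"
proof (rule ext)
  fix U assume f: "fsupp f"
  show "wedge f ext_one U = f U"
  proof (cases "finite U")
    case True
    have "wedge f ext_one U = (\<Sum>S\<in>Pow U. wsign S (U-S) * f S * ext_one (U-S))"
      using True by (simp add: wedge_def)
    also have "\<dots> = (\<Sum>S\<in>Pow U. if S = U then f U else 0)"
      by (rule sum.cong) (auto simp: ext_one_def)
    also have "\<dots> = f U" using True by (subst sum.delta) auto
    finally show ?thesis .
  qed (use f in \<open>auto simp: wedge_def fsupp_def\<close>)
qed

lemma wedge_hom: assumes "hom a f" "hom b g" shows "hom (a+b) (wedge f g)"
  unfolding hom_def
proof (intro allI impI)
  fix U assume "wedge f g U \<noteq> 0"
  then have fin: "finite U" and "(\<Sum>S\<in>Pow U. wsign S (U - S) * f S * g (U - S)) \<noteq> 0"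
    by (auto simp: wedge_def split: if_splits)
  then obtain S where S: "S \<subseteq> U" "f S \<noteq> 0" "g (U-S) \<noteq> 0"
    by (elim sum.not_neutral_contains_not_neutral) auto
  have fS: "finite S" using S fin finite_subset by blast
  have "card (U-S) = card U - card S" using fS S(1) by (rule card_Diff_subset)
  moreover have "card S \<le> card U" using S(1) fin by (rule card_mono[rotated])
  ultimately have "card U = card S + card (U-S)" by arith
  thus "finite U \<and> card U = a + b" using fin S assms by (auto simp: hom_def)
qed

lemma wedge_comm: assumes "hom a f" "hom b g"
  shows "wedge f g = ext_scale ((-1)^(a*b)) (wedge g f)"
proof (rule ext)
  fix U :: "gen set"
  show "wedge f g U = ext_scale ((-1)^(a*b)) (wedge g f) U"
  proof (cases "finite U")
    case fin: True
    have "wedge g f U = (\<Sum>S\<in>Pow U. wsign S (U-S) * g S * f (U-S))"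
      using fin by (simp add: wedge_def)
    also have "\<dots> = (\<Sum>S\<in>Pow U. wsign (U-S) S * g (U-S) * f S)"
      by (rule sum.reindex_bij_witness[where i="\<lambda>S. U - S" and j="\<lambda>S. U - S"]) (auto simp: double_diff)
    finally have G: "wedge g f U = \<dots>" .
    have trm: "wsign S (U - S) * f S * g (U - S) = (-1)^(a*b) * (wsign (U-S) S * g (U-S) * f S)"
      if "S \<subseteq> U" for S
    proof (cases "f S = 0 \<or> g (U-S) = 0")
      case False
      then have c: "card S = a" "card (U-S) = b" using assms by (auto simp: hom_def)
      have "wsign S (U-S) * wsign (U-S) S = (-1)^(a*b)"
        using wsign_swap[of S "U-S"] fin that c finite_subset by auto
      then have "wsign S (U-S) = (-1)^(a*b) * wsign (U-S) S"
        by (metis mult.assoc mult.right_neutral wsign_sq)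
      thus ?thesis by simp
    qed auto
    show ?thesis using fin G trm by (simp add: wedge_def sum_distrib_left, intro sum.cong) auto
  qed (simp add: wedge_def)
qed

lemma cneg: assumes "(a::complex) = - a" shows "a = 0"
proof -
  have "a + a = 0" using assms by (simp only: eq_neg_iff_add_eq_0)
  then show ?thesis by simp
qed

lemma ext_self_neg: assumes "(f::ext) = - f" shows "f = 0"
proof (rule ext)
  fix U
  have "f U = - f U" using fun_cong[OF assms, of U] by (simp only: uminus_apply)
  then show "f U = 0 U" unfolding zero_fun_apply by (rule cneg)
qed

lemma hom_add: assumes "hom d f" "hom d g" shows "hom d (f + g)"
  unfolding hom_def
proof (intro allI impI)
  fix S assume "(f + g) S \<noteq> 0"
  then have "f S \<noteq> 0 \<or> g S \<noteq> 0" by auto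
  then show "finite S \<and> card S = d" using assms unfolding hom_def by blast
qed
lemma ext_scale_zero[simp]: "ext_scale c 0 = 0" by (simp add: fun_eq_iff)
lemma hom_uminus: "hom d f \<Longrightarrow> hom d (- f)"
  by (auto simp: hom_def)
lemma hom_diff: "hom d f \<Longrightarrow> hom d g \<Longrightarrow> hom d (f - g)"
  by (simp only: diff_conv_add_uminus) (intro hom_add hom_uminus)
lemma hom_scale: "hom d f \<Longrightarrow> hom d (ext_scale c f)"
  by (auto simp: hom_def)
lemma hom_zero[simp]: "hom d 0"
  by (auto simp: hom_def)
lemma hom_sum: "(\<And>i. i \<in> I \<Longrightarrow> hom d (F i)) \<Longrightarrow> hom d (\<Sum>i\<in>I. F i)"
  by (induction I rule: infinite_finite_induct) (auto intro: hom_add)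
lemma hom_one: "hom 0 ext_one" by (auto simp: hom_def ext_one_def)
lemma hom_Psi: "hom 1 (Psi i j)" by (auto simp: hom_def Psi_def)

lemma ext_scale_m1: "ext_scale (-1) f = - f" by (auto simp: fun_eq_iff)
lemma ext_scale_1: "ext_scale 1 f = f" by (auto simp: fun_eq_iff)

lemma wedge_self_odd: assumes "hom a f" "odd a" shows "wedge f f = 0"
proof -
  have "wedge f f = ext_scale ((-1)^(a*a)) (wedge f f)" by (rule wedge_comm[OF assms(1,1)])
  also have "(-1::complex)^(a*a) = -1" using assms(2) by (intro neg_one_odd_power) simp
  finally have "wedge f f = ext_scale (-1) (wedge f f)" .
  hence "wedge f f = - wedge f f" unfolding ext_scale_m1 .
  thus ?thesis by (rule ext_self_neg)
qed

lemma wedge_comm1: assumes "hom a f" "hom 1 x"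
  shows "wedge f x = ext_scale ((-1)^a) (wedge x f)"
  using wedge_comm[OF assms] by simp

lemma wedge_xx_left: assumes "hom 1 x" "hom m g" shows "wedge (wedge x g) x = 0"
proof -
  have "wedge (wedge x g) x = wedge x (wedge g x)" by (rule wedge_assoc)
  also have "\<dots> = wedge x (ext_scale ((-1)^m) (wedge x g))" by (simp add: wedge_comm1[OF assms(2,1)])
  also have "\<dots> = ext_scale ((-1)^m) (wedge (wedge x x) g)" by (simp add: wedge_scale_right wedge_assoc)
  also have "\<dots> = 0" unfolding wedge_self_odd[OF assms(1) odd_one] by (simp only: wedge_zero_left ext_scale_zero)
  finally show ?thesis .
qed

section \<open>Matrices\<close>

lemma mmul_eq: "mmul N X Y i j = (\<Sum>k\<in>{0..<N}. wedge (X i k) (Y k j))"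
  by (simp add: mmul_def ext_sum_eq)

lemma mmul_assoc: "mmul N (mmul N X Y) Z = mmul N X (mmul N Y Z)"
proof (rule ext, rule ext)
  fix i j
  have "mmul N (mmul N X Y) Z i j = (\<Sum>k\<in>{0..<N}. \<Sum>l\<in>{0..<N}. wedge (X i l) (wedge (Y l k) (Z k j)))"
    by (simp add: mmul_eq wedge_sum_left wedge_assoc)
  also have "\<dots> = (\<Sum>l\<in>{0..<N}. \<Sum>k\<in>{0..<N}. wedge (X i l) (wedge (Y l k) (Z k j)))"
    by (rule sum.swap)
  also have "\<dots> = mmul N X (mmul N Y Z) i j" by (simp add: mmul_eq wedge_sum_right)
  finally show "mmul N (mmul N X Y) Z i j = mmul N X (mmul N Y Z) i j" .
qed

lemma mmul_mid_right: assumes "j < N" "fsupp (X i j)" shows "mmul N X mid i j = X i j"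
proof -
  have "mmul N X mid i j = (\<Sum>k\<in>{0..<N}. if k = j then X i j else 0)"
    unfolding mmul_eq mid_def using assms(2)
    by (intro sum.cong) (auto simp: wedge_one_right ext_zero_eq)
  also have "\<dots> = X i j" using assms(1) by simp
  finally show ?thesis .
qed

lemma mmul_mid_left: assumes "i < N" "fsupp (X i j)" shows "mmul N mid X i j = X i j"
proof -
  have "mmul N mid X i j = (\<Sum>k\<in>{0..<N}. if k = i then X i j else 0)"
    unfolding mmul_eq mid_def using assms(2)
    by (intro sum.cong) (auto simp: wedge_one_left ext_zero_eq)
  also have "\<dots> = X i j" using assms(1) by simp
  finally show ?thesis .
qed

lemma mpow_left:
  assumes fsX: "\<And>i j. fsupp (X i j)"
  shows "i < N \<Longrightarrow> j < N \<Longrightarrow> mmul N X (mpow N X n) i j = mpow N X (Suc n) i j"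
proof (induction n arbitrary: i j)
  case 0
  then show ?case using fsX by (simp add: mmul_mid_right mmul_mid_left)
next
  case (Suc n)
  have "mmul N X (mpow N X (Suc n)) i j = mmul N (mmul N X (mpow N X n)) X i j"
    by (simp add: mmul_assoc)
  also have "\<dots> = mmul N (mpow N X (Suc n)) X i j"
    using Suc by (subst (1 2) mmul_eq) (intro sum.cong refl arg_cong2[where f=wedge], auto)
  finally show ?case by simp
qed

lemma hom_mmul: assumes "\<And>i k. hom a (X i k)" "\<And>k j. hom b (Y k j)"
  shows "hom (a+b) (mmul N X Y i j)"
  unfolding mmul_eq by (intro hom_sum wedge_hom assms)

lemma hom_mid: "hom 0 (mid i j)" by (simp add: mid_def hom_one ext_zero_eq)

lemma hom_mpow: assumes "\<And>i j. hom 1 (X i j)" shows "hom n (mpow N X n i j)"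
proof (induction n arbitrary: i j)
  case 0 then show ?case by (simp add: hom_mid)
next
  case (Suc n) then show ?case using hom_mmul[of n "mpow N X n" 1 X] assms by simp
qed

lemma trace_even_zero:
  assumes h: "\<And>i j. hom 1 (X i j)" and n: "odd n"
  shows "mtrace N (mpow N X (Suc n)) = 0"
proof -
  have fsX: "\<And>i j. fsupp (X i j)" using h hom_fs by blast
  have "mtrace N (mpow N X (Suc n)) = (\<Sum>i\<in>{0..<N}. \<Sum>k\<in>{0..<N}. wedge (mpow N X n i k) (X k i))"
    by (simp add: mtrace_def ext_sum_eq mmul_eq)
  also have "\<dots> = (\<Sum>i\<in>{0..<N}. \<Sum>k\<in>{0..<N}. - wedge (X k i) (mpow N X n i k))"
    using n by (intro sum.cong refl) (simp add: wedge_comm1[OF hom_mpow[OF h] h] ext_scale_m1)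
  also have "\<dots> = - (\<Sum>k\<in>{0..<N}. \<Sum>i\<in>{0..<N}. wedge (X k i) (mpow N X n i k))"
    by (subst sum.swap) (simp add: sum_negf)
  also have "\<dots> = - (\<Sum>k\<in>{0..<N}. mmul N X (mpow N X n) k k)"
    by (simp add: mmul_eq)
  also have "\<dots> = - (\<Sum>k\<in>{0..<N}. mpow N X (Suc n) k k)"
    using mpow_left[OF fsX] by (intro arg_cong[where f=uminus] sum.cong) auto
  also have "\<dots> = - mtrace N (mpow N X (Suc n))"
    by (simp add: mtrace_def ext_sum_eq)
  finally have "mtrace N (mpow N X (Suc n)) = - mtrace N (mpow N X (Suc n))" .
  thus ?thesis by (rule ext_self_neg)
qed

definition cc :: "nat \<Rightarrow> ext" where
  "cc N = ext_scale (1 / complex_of_real (sqrt (real N))) (chi N)"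

lemma hom_chi: "hom 1 (chi N)"
  unfolding chi_def ext_sum_eq by (intro hom_scale hom_sum hom_Psi)
lemma hom_cc: "hom 1 (cc N)"
  unfolding cc_def by (intro hom_scale hom_chi)
lemma Amat_eq: "Amat N i j = (if i = j then Psi i j - cc N else Psi i j)"
  by (simp add: Amat_def ext_diff_eq cc_def)
lemma hom_Amat: "hom 1 (Amat N i j)"
proof (cases "i = j")
  case True then show ?thesis unfolding Amat_eq using hom_diff[OF hom_Psi hom_cc] by simp
next
  case False then show ?thesis unfolding Amat_eq using hom_Psi by simp
qed
lemma Psi_split: "Psi i j = Amat N i j + (if i = j then cc N else 0)"
  unfolding Amat_eq by simp

lemma psi_pow:
  "i < N \<Longrightarrow> j < N \<Longrightarrow> mpow N Psi n i j = mpow N (Amat N) n i j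
     + (if odd n then wedge (cc N) (mpow N (Amat N) (n-1) i j) else 0)"
proof (induction n arbitrary: i j)
  case 0 then show ?case by simp
next
  case (Suc n)
  define A where "A = Amat N"
  define c where "c = cc N"
  define B where "B = mpow N A"
  define P where "P = mpow N Psi n"
  define E where "E = (\<lambda>i k. if odd n then wedge c (B (n-1) i k) else 0)"
  have IH: "\<And>k. k < N \<Longrightarrow> P i k = B n i k + E i k"
    unfolding P_def B_def E_def A_def c_def by (rule Suc.IH[OF Suc.prems(1)])
  have hc: "hom 1 c" unfolding c_def by (rule hom_cc)
  have hB: "\<And>m i j. hom m (B m i j)" unfolding B_def A_def by (intro hom_mpow hom_Amat)
  have s1: "mpow N Psi (Suc n) i j = (\<Sum>k\<in>{0..<N}. wedge (P i k) (A k j)) + wedge (P i j) c"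
  proof -
    have "mpow N Psi (Suc n) i j = (\<Sum>k\<in>{0..<N}. wedge (P i k) (A k j) + (if k = j then wedge (P i j) c else 0))"
      unfolding mpow.simps mmul_eq P_def
      by (intro sum.cong refl) (auto simp: Psi_split[of _ _ N] A_def c_def wedge_add_right)
    also have "\<dots> = (\<Sum>k\<in>{0..<N}. wedge (P i k) (A k j)) + wedge (P i j) c"
      using Suc.prems by (simp add: sum.distrib)
    finally show ?thesis .
  qed
  have s2: "(\<Sum>k\<in>{0..<N}. wedge (P i k) (A k j)) = B (Suc n) i j + (if odd n then wedge c (B n i j) else 0)"
  proof -
    have "(\<Sum>k\<in>{0..<N}. wedge (P i k) (A k j)) = (\<Sum>k\<in>{0..<N}. wedge (B n i k) (A k j)) + (\<Sum>k\<in>{0..<N}. wedge (E i k) (A k j))"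
      using IH by (simp add: wedge_add_left sum.distrib)
    also have "(\<Sum>k\<in>{0..<N}. wedge (B n i k) (A k j)) = B (Suc n) i j"
      by (simp add: B_def mmul_eq)
    also have "(\<Sum>k\<in>{0..<N}. wedge (E i k) (A k j)) = (if odd n then wedge c (B n i j) else 0)"
    proof (cases "odd n")
      case True
      then obtain m where m: "n = Suc m" by (cases n) auto
      have "(\<Sum>k\<in>{0..<N}. wedge (E i k) (A k j)) = wedge c (\<Sum>k\<in>{0..<N}. wedge (B m i k) (A k j))"
        using True m by (simp add: E_def wedge_assoc wedge_sum_right)
      also have "(\<Sum>k\<in>{0..<N}. wedge (B m i k) (A k j)) = B n i j"
        by (simp add: B_def mmul_eq m)
      finally show ?thesis using True by simp
    qed (simp add: E_def)
    finally show ?thesis .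
  qed
  have s3: "wedge (P i j) c = ext_scale ((-1)^n) (wedge c (B n i j))"
  proof -
    have "wedge (P i j) c = wedge (B n i j) c + wedge (E i j) c"
      using IH Suc.prems by (simp add: wedge_add_left)
    also have "wedge (B n i j) c = ext_scale ((-1)^n) (wedge c (B n i j))"
      by (rule wedge_comm1[OF hB hc])
    also have "wedge (E i j) c = 0"
      unfolding E_def using wedge_xx_left[OF hc hB] by simp
    finally show ?thesis by (simp only: add_0_right)
  qed
  show ?case
  proof (cases "odd n")
    case True
    then have "ext_scale ((-1)^n) (wedge c (B n i j)) = - wedge c (B n i j)"
      by (simp add: ext_scale_m1)
    then show ?thesis using True s1 s2 s3
      by (simp add: A_def c_def B_def)
  next
    case False
    then have "ext_scale ((-1)^n) (wedge c (B n i j)) = wedge c (B n i j)"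
      by (simp add: ext_scale_1)
    then show ?thesis using False s1 s2 s3
      by (simp add: A_def c_def B_def)
  qed
qed

lemma TrPsi_eq:
  assumes "p \<ge> 3" "odd p"
  shows "TrPsi N p = TrA N p"
proof -
  have n1: "p - 1 = Suc (p - 2)" using assms by simp
  have n2: "odd (p - 2)" using assms by presburger
  obtain n where n: "p - 1 = Suc n" "odd n" using n1 n2 by blast
  have "TrPsi N p = (\<Sum>i\<in>{0..<N}. mpow N (Amat N) p i i + wedge (cc N) (mpow N (Amat N) (p-1) i i))"
    unfolding TrPsi_def mtrace_def ext_sum_eq
    using assms by (intro sum.cong refl) (simp add: psi_pow)
  also have "\<dots> = TrA N p + wedge (cc N) (mtrace N (mpow N (Amat N) (p-1)))"
    by (simp add: TrA_def mtrace_def ext_sum_eq sum.distrib wedge_sum_right)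
  also have "mtrace N (mpow N (Amat N) (p-1)) = 0"
    unfolding n(1) by (rule trace_even_zero[OF hom_Amat n(2)])
  finally have "TrPsi N p = TrA N p + wedge (cc N) 0" .
  thus ?thesis by (simp only: wedge_zero_right add_0_right)
qed

lemma E_module_hom_wedge_right: "module_hom ext_scale ext_scale (wedge w)"
  by unfold_locales (simp_all add: wedge_add_right wedge_scale_right)
lemma E_module_hom_wedge_left: "module_hom ext_scale ext_scale (\<lambda>g. wedge g w)"
  by unfold_locales (simp_all add: wedge_add_left wedge_scale_left)

definition lin :: "nat \<Rightarrow> ext \<Rightarrow> bool" where
  "lin N x \<longleftrightarrow> (\<forall>S. x S \<noteq> 0 \<longrightarrow> (\<exists>g\<in>gens N. S = {g}))"

definition trl :: "nat \<Rightarrow> ext \<Rightarrow> complex" where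
  "trl N x = (\<Sum>i<N. x {(i,i)})"

lemma sl_lin_iff: "x \<in> sl_lin N \<longleftrightarrow> lin N x \<and> trl N x = 0"
  by (simp add: sl_lin_def lin_def trl_def)

lemma lin_hom: "lin N x \<Longrightarrow> hom 1 x"
  by (auto simp: lin_def hom_def)

lemma lin_Lam: "lin N x \<Longrightarrow> x \<in> Lam N"
  by (auto simp: lin_def Lam_def)

lemma lin_add: "lin N x \<Longrightarrow> lin N y \<Longrightarrow> lin N (x + y)"
  unfolding lin_def by (metis add.right_neutral plus_fun_apply add_0)
lemma lin_scale: "lin N x \<Longrightarrow> lin N (ext_scale c x)"
  unfolding lin_def by simp
lemma lin_diff: "lin N x \<Longrightarrow> lin N y \<Longrightarrow> lin N (x - y)"
  unfolding lin_def by (metis diff_0_right diff_self minus_apply)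
lemma lin_zero: "lin N 0" by (simp add: lin_def)
lemma lin_sum: "(\<And>i. i \<in> I \<Longrightarrow> lin N (F i)) \<Longrightarrow> lin N (\<Sum>i\<in>I. F i)"
proof (induction I rule: infinite_finite_induct)
  case (insert x Fa)
  then show ?case by (subst sum.insert) (auto intro!: lin_add)
qed (simp_all add: lin_zero)

lemma lin_Psi: "i < N \<Longrightarrow> j < N \<Longrightarrow> lin N (Psi i j)"
  by (auto simp: lin_def Psi_def gens_def)

lemma lin_chi: "lin N (chi N)"
  unfolding chi_def ext_sum_eq by (intro lin_scale lin_sum lin_Psi) auto

lemma trl_add: "trl N (x + y) = trl N x + trl N y" by (simp add: trl_def sum.distrib)
lemma trl_scale: "trl N (ext_scale c x) = c * trl N x" by (simp add: trl_def sum_distrib_left)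
lemma trl_diff: "trl N (x - y) = trl N x - trl N y" by (simp add: trl_def sum_subtractf)

lemma trl_chi: assumes "N > 0" shows "trl N (chi N) = complex_of_real (sqrt (real N))"
proof -
  have "trl N (chi N) = (1 / complex_of_real (sqrt (real N))) * (\<Sum>i<N. \<Sum>k\<in>{0..<N}. Psi k k {(i,i)})"
    by (simp add: trl_def chi_def ext_sum_def sum_distrib_left)
  also have "(\<Sum>i<N. \<Sum>k\<in>{0..<N}. Psi k k {(i,i)}) = (\<Sum>i<N. 1::complex)"
  proof (intro sum.cong refl)
    fix i assume "i \<in> {..<N}"
    then have "(\<Sum>k\<in>{0..<N}. Psi k k {(i,i)}) = (\<Sum>k\<in>{0..<N}. if k = i then 1 else 0)"
      by (intro sum.cong) (auto simp: Psi_def)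
    also have "\<dots> = 1" using \<open>i \<in> {..<N}\<close> by simp
    finally show "(\<Sum>k\<in>{0..<N}. Psi k k {(i,i)}) = 1" .
  qed
  also have "(\<Sum>i<N. 1::complex) = of_real (real N)" by simp
  finally have "trl N (chi N) = of_real (real N) / of_real (sqrt (real N))" by simp
  also have "\<dots> = of_real (real N / sqrt (real N))" by simp
  also have "real N / sqrt (real N) = sqrt (real N)"
    using assms by (metis real_div_sqrt of_nat_0_le_iff)
  finally show ?thesis .
qed

lemma sqrtN_nz: "N > 0 \<Longrightarrow> complex_of_real (sqrt (real N)) \<noteq> 0" by simp

definition ell :: "nat \<Rightarrow> ext \<Rightarrow> complex" where
  "ell N x = trl N x / complex_of_real (sqrt (real N))"

lemma sl_part: assumes "N > 0" "lin N x"
  shows "x - ext_scale (ell N x) (chi N) \<in> sl_lin N"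
  unfolding sl_lin_iff
proof
  show "lin N (x - ext_scale (ell N x) (chi N))" using assms by (intro lin_diff lin_scale lin_chi)
  show "trl N (x - ext_scale (ell N x) (chi N)) = 0"
    using assms by (simp add: trl_diff trl_scale trl_chi ell_def)
qed

lemma ell_chi: "N > 0 \<Longrightarrow> ell N (chi N) = 1"
  by (simp add: ell_def trl_chi)

section \<open>Wedge with a generator and monomials\<close>

definition mnm :: "gen set \<Rightarrow> ext" where "mnm S = (\<lambda>U. if U = S then 1 else 0)"

lemma wedge_Psi_apply:
  "wedge (Psi i j) f U = (if finite U \<and> (i,j) \<in> U then wsign {(i,j)} (U - {(i,j)}) * f (U - {(i,j)}) else 0)"
proof (cases "finite U")
  case True
  have "wedge (Psi i j) f U = (\<Sum>S\<in>Pow U. wsign S (U-S) * Psi i j S * f (U-S))"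
    using True by (simp add: wedge_def)
  also have "\<dots> = (\<Sum>S\<in>Pow U. if S = {(i,j)} then wsign {(i,j)} (U - {(i,j)}) * f (U - {(i,j)}) else 0)"
    by (rule sum.cong) (auto simp: Psi_def)
  also have "\<dots> = (if (i,j) \<in> U then wsign {(i,j)} (U - {(i,j)}) * f (U - {(i,j)}) else 0)"
    using True by (subst sum.delta) auto
  finally show ?thesis using True by simp
qed (simp add: wedge_def)

lemma wedge_Psi_mnm:
  assumes "(i,j) \<notin> T" "finite T"
  shows "wedge (Psi i j) (mnm T) = ext_scale (wsign {(i,j)} T) (mnm (insert (i,j) T))"
proof (rule ext)
  fix U
  show "wedge (Psi i j) (mnm T) U = ext_scale (wsign {(i,j)} T) (mnm (insert (i,j) T)) U"
  proof (cases "U = insert (i,j) T")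
    case True
    then have "U - {(i,j)} = T" using assms by auto
    then show ?thesis using True assms by (simp add: wedge_Psi_apply mnm_def)
  next
    case False
    then have "\<not> ((i,j) \<in> U \<and> U - {(i,j)} = T)" by auto
    then show ?thesis using False by (auto simp: wedge_Psi_apply mnm_def)
  qed
qed

lemma mnm_empty: "mnm {} = ext_one" by (simp add: mnm_def ext_one_def fun_eq_iff)

lemma Lam_expand: assumes "f \<in> Lam N"
  shows "f = (\<Sum>S\<in>Pow (gens N). ext_scale (f S) (mnm S))"
proof (rule ext)
  fix U
  have fin: "finite (Pow (gens N))" by (simp add: gens_def)
  have "(\<Sum>S\<in>Pow (gens N). ext_scale (f S) (mnm S)) U = (\<Sum>S\<in>Pow (gens N). if S = U then f U else 0)"
    unfolding fun_sum_apply by (intro sum.cong) (auto simp: mnm_def)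
  also have "\<dots> = f U" using fin assms by (subst sum.delta) (auto simp: Lam_def)
  finally show "f U = (\<Sum>S\<in>Pow (gens N). ext_scale (f S) (mnm S)) U" by simp
qed

lemma Lam_deg_expand: assumes "f \<in> Lam_deg N R"
  shows "f = (\<Sum>S\<in>{S. S \<subseteq> gens N \<and> card S = R}. ext_scale (f S) (mnm S))"
proof -
  have "f = (\<Sum>S\<in>Pow (gens N). ext_scale (f S) (mnm S))"
    using assms by (intro Lam_expand) (simp add: Lam_deg_def)
  also have "\<dots> = (\<Sum>S\<in>{S. S \<subseteq> gens N \<and> card S = R}. ext_scale (f S) (mnm S))"
  proof (rule sum.mono_neutral_right)
    show "finite (Pow (gens N))" by (simp add: gens_def)
    show "{S. S \<subseteq> gens N \<and> card S = R} \<subseteq> Pow (gens N)" by auto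
    show "\<forall>i\<in>Pow (gens N) - {S. S \<subseteq> gens N \<and> card S = R}. ext_scale (f i) (mnm i) = 0"
      using assms by (auto simp: Lam_deg_def fun_eq_iff)
  qed
  finally show ?thesis .
qed

lemma lin_expand: assumes "lin N x"
  shows "x = (\<Sum>g\<in>gens N. ext_scale (x {g}) (Psi (fst g) (snd g)))"
proof (rule ext)
  fix U
  have fin: "finite (gens N)" by (simp add: gens_def)
  have "(\<Sum>g\<in>gens N. ext_scale (x {g}) (Psi (fst g) (snd g))) U = (\<Sum>g\<in>gens N. if U = {g} then x U else 0)"
    unfolding fun_sum_apply by (intro sum.cong) (auto simp: Psi_def)
  also have "\<dots> = x U"
  proof (cases "\<exists>g\<in>gens N. U = {g}")
    case True
    then obtain g where g: "g \<in> gens N" "U = {g}" by blast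
    have "(\<Sum>g\<in>gens N. if U = {g} then x U else 0) = (\<Sum>h\<in>gens N. if h = g then x U else 0)"
      using g by (intro sum.cong) auto
    also have "\<dots> = x U" using g fin by simp
    finally show ?thesis .
  next
    case False
    then show ?thesis using assms by (auto simp: lin_def)
  qed
  finally show "x U = (\<Sum>g\<in>gens N. ext_scale (x {g}) (Psi (fst g) (snd g))) U" by simp
qed

definition Dp :: "nat \<Rightarrow> nat \<Rightarrow> ext set" where
  "Dp N R = (if R = 0 then {0} else sl_deg N (R - 1))"

definition gD :: "nat \<Rightarrow> nat \<Rightarrow> ext set" where
  "gD N R = {wedge_list fs | fs. length fs = R \<and> set fs \<subseteq> sl_lin N}"

lemma sl_deg_eq: "sl_deg N R = E.span (gD N R)" by (simp add: sl_deg_def gD_def)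

lemma D_subspace: "E.subspace (sl_deg N R)" by (simp add: sl_deg_eq)
lemma zero_subspace: "E.subspace {0}" by (simp add: E.subspace_def)
lemma Dp_subspace: "E.subspace (Dp N R)" by (simp add: Dp_def D_subspace zero_subspace)

lemma wedge_Lam: assumes "f \<in> Lam N" "g \<in> Lam N" shows "wedge f g \<in> Lam N"
  unfolding Lam_def
proof (intro CollectI allI impI)
  fix U assume "wedge f g U \<noteq> 0"
  then have fin: "finite U" and "(\<Sum>S\<in>Pow U. wsign S (U - S) * f S * g (U - S)) \<noteq> 0"
    by (auto simp: wedge_def split: if_splits)
  then obtain S where S: "S \<subseteq> U" "f S \<noteq> 0" "g (U-S) \<noteq> 0"
    by (elim sum.not_neutral_contains_not_neutral) auto
  then have "S \<subseteq> gens N" "U - S \<subseteq> gens N" using assms by (auto simp: Lam_def)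
  then show "U \<subseteq> gens N" by blast
qed

lemma Lam_subspace: "E.subspace (Lam N)"
  unfolding E.subspace_def
proof (intro conjI ballI allI)
  show "0 \<in> Lam N" by (simp add: Lam_def)
next
  fix x y assume x: "x \<in> Lam N" and y: "y \<in> Lam N"
  show "x + y \<in> Lam N" unfolding Lam_def
  proof (intro CollectI allI impI)
    fix S assume "(x + y) S \<noteq> 0"
    then have "x S \<noteq> 0 \<or> y S \<noteq> 0" by auto
    then show "S \<subseteq> gens N" using x y by (auto simp: Lam_def)
  qed
next
  fix c x assume "x \<in> Lam N" then show "ext_scale c x \<in> Lam N" by (simp add: Lam_def)
qed
lemma hom_subspace: "E.subspace {a. hom R a}"
  by (auto simp: E.subspace_def intro: hom_add hom_scale)
lemma fsupp_subspace: "E.subspace {a. fsupp a}"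
  by (auto simp: E.subspace_def fsupp_def)
lemma one_Lam: "ext_one \<in> Lam N" by (auto simp: Lam_def ext_one_def)

lemma sl_lin_lin: "x \<in> sl_lin N \<Longrightarrow> lin N x" by (simp add: sl_lin_iff)

lemma wedge_list_props:
  "set fs \<subseteq> sl_lin N \<Longrightarrow> hom (length fs) (wedge_list fs) \<and> wedge_list fs \<in> Lam N"
proof (induction fs)
  case Nil then show ?case by (simp add: hom_one one_Lam)
next
  case (Cons x fs)
  then have x: "lin N x" by (simp add: sl_lin_lin)
  show ?case using Cons x wedge_hom[OF lin_hom[OF x], of "length fs" "wedge_list fs"]
    by (auto intro: wedge_Lam lin_Lam)
qed

lemma D_hom_Lam: assumes "a \<in> sl_deg N R" shows "hom R a \<and> a \<in> Lam N"
proof -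
  have "sl_deg N R \<subseteq> {a. hom R a} \<inter> Lam N"
    unfolding sl_deg_eq
    by (rule E.span_minimal) (auto simp: gD_def wedge_list_props E.subspace_inter hom_subspace Lam_subspace)
  then show ?thesis using assms by auto
qed

lemma D_hom: "a \<in> sl_deg N R \<Longrightarrow> hom R a" using D_hom_Lam by blast
lemma D_Lam: "a \<in> sl_deg N R \<Longrightarrow> a \<in> Lam N" using D_hom_Lam by blast
lemma D_fsupp: "a \<in> sl_deg N R \<Longrightarrow> fsupp a" using D_hom hom_fs by blast

lemma D_Lam_deg: "a \<in> sl_deg N R \<Longrightarrow> a \<in> Lam_deg N R"
  using D_hom_Lam[of a N R] by (auto simp: Lam_deg_def hom_def)

lemma D_left: assumes "w \<in> sl_lin N" "a \<in> sl_deg N R"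
  shows "wedge w a \<in> sl_deg N (Suc R)"
proof -
  have "wedge w ` sl_deg N R = E.span (wedge w ` gD N R)"
    unfolding sl_deg_eq by (rule module_hom.span_image[OF E_module_hom_wedge_right, symmetric])
  also have "\<dots> \<subseteq> E.span (gD N (Suc R))"
  proof (rule E.span_mono, rule image_subsetI)
    fix g assume "g \<in> gD N R"
    then obtain fs where "g = wedge_list fs" "length fs = R" "set fs \<subseteq> sl_lin N" by (auto simp: gD_def)
    then show "wedge w g \<in> gD N (Suc R)" using assms(1) unfolding gD_def
      by (intro CollectI exI[of _ "w # fs"]) auto
  qed
  finally show ?thesis using assms(2) by (auto simp: sl_deg_eq)
qed

lemma one_D: "ext_one \<in> sl_deg N 0"
  unfolding sl_deg_eq gD_def by (rule E.span_base) (auto intro!: exI[of _ "[]"])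

definition G :: "nat \<Rightarrow> nat \<Rightarrow> ext set" where
  "G N R = {a + wedge (chi N) b | a b. a \<in> sl_deg N R \<and> b \<in> Dp N R}"

lemma G_subspace: "E.subspace (G N R)"
  unfolding E.subspace_def
proof (intro conjI ballI allI)
  show "0 \<in> G N R" unfolding G_def
    using E.subspace_0[OF D_subspace] E.subspace_0[OF Dp_subspace] by force
next
  fix x y assume "x \<in> G N R" "y \<in> G N R"
  then obtain a b a' b' where "x = a + wedge (chi N) b" "a \<in> sl_deg N R" "b \<in> Dp N R"
    "y = a' + wedge (chi N) b'" "a' \<in> sl_deg N R" "b' \<in> Dp N R" by (auto simp: G_def)
  then show "x + y \<in> G N R" unfolding G_def
    by (intro CollectI exI[of _ "a + a'"] exI[of _ "b + b'"])
      (auto simp: wedge_add_right E.subspace_add[OF D_subspace] E.subspace_add[OF Dp_subspace] algebra_simps)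
next
  fix c x assume "x \<in> G N R"
  then obtain a b where "x = a + wedge (chi N) b" "a \<in> sl_deg N R" "b \<in> Dp N R" by (auto simp: G_def)
  then show "ext_scale c x \<in> G N R" unfolding G_def
    by (intro CollectI exI[of _ "ext_scale c a"] exI[of _ "ext_scale c b"])
      (auto simp: wedge_scale_right E.subspace_scale[OF D_subspace] E.subspace_scale[OF Dp_subspace] E.scale_right_distrib)
qed

lemma hom_chiN: "hom 1 (chi N)" by (rule hom_chi)

lemma chi_chi_zero: "wedge (chi N) (wedge (chi N) b) = 0"
proof -
  have "wedge (chi N) (wedge (chi N) b) = wedge (wedge (chi N) (chi N)) b" by (simp add: wedge_assoc)
  also have "\<dots> = wedge 0 b" by (simp only: wedge_self_odd[OF hom_chi odd_one])
  also have "\<dots> = 0" by (rule wedge_zero_left)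
  finally show ?thesis .
qed

lemma anticomm_lin: assumes "hom 1 w" "hom 1 y"
  shows "wedge w (wedge y b) = - wedge y (wedge w b)"
proof -
  have "wedge w (wedge y b) = wedge (wedge w y) b" by (simp add: wedge_assoc)
  also have "wedge w y = ext_scale (-1) (wedge y w)" using wedge_comm1[OF assms(1,2)] by simp
  also have "wedge (ext_scale (-1) (wedge y w)) b = - wedge y (wedge w b)"
    by (simp only: wedge_scale_left wedge_assoc ext_scale_m1 wedge_uminus_left)
  finally show ?thesis .
qed

lemma good_mult: assumes N: "N > 0" and x: "lin N x" and g: "g \<in> G N R"
  shows "wedge x g \<in> G N (Suc R)"
proof -
  obtain a b where g': "g = a + wedge (chi N) b" and a: "a \<in> sl_deg N R" and b: "b \<in> Dp N R"
    using g by (auto simp: G_def)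
  define l where "l = ell N x"
  define w where "w = x - ext_scale l (chi N)"
  have w: "w \<in> sl_lin N" unfolding w_def l_def by (rule sl_part[OF N x])
  have xw: "x = w + ext_scale l (chi N)" by (simp add: w_def)
  have hw: "hom 1 w" using w by (intro lin_hom sl_lin_lin)
  have e1: "wedge w (wedge (chi N) b) = - wedge (chi N) (wedge w b)"
    by (rule anticomm_lin[OF hw hom_chi])
  have "wedge x g = wedge w a + wedge (chi N) (ext_scale l a - wedge w b)"
    unfolding xw g' by (simp add: wedge_add_left wedge_add_right wedge_scale_left wedge_diff_right
        e1 chi_chi_zero algebra_simps wedge_scale_right)
  moreover have "wedge w a \<in> sl_deg N (Suc R)" by (rule D_left[OF w a])
  moreover have "ext_scale l a - wedge w b \<in> Dp N (Suc R)"
  proof -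
    have "wedge w b \<in> sl_deg N R"
    proof (cases "R = 0")
      case True then show ?thesis using b E.subspace_0[OF D_subspace] by (simp add: Dp_def)
    next
      case False then show ?thesis using b D_left[OF w, of b "R - 1"] by (simp add: Dp_def)
    qed
    then show ?thesis using a by (simp add: Dp_def E.subspace_diff[OF D_subspace] E.subspace_scale[OF D_subspace])
  qed
  ultimately show ?thesis unfolding G_def by blast
qed

lemma one_G: "ext_one \<in> G N 0"
  unfolding G_def Dp_def using one_D by force

lemma mnm_G: assumes N: "N > 0" shows "S \<subseteq> gens N \<Longrightarrow> mnm S \<in> G N (card S)"
proof -
  assume S: "S \<subseteq> gens N"
  have "finite S" using S finite_subset by (auto simp: gens_def)
  then show ?thesis using S
  proof (induction S rule: finite_induct)
    case empty then show ?case by (simp add: mnm_empty one_G)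
  next
    case (insert h T)
    obtain i j where h: "h = (i,j)" by (cases h)
    have ij: "i < N" "j < N" using insert(4) h by (auto simp: gens_def)
    have "wedge (Psi i j) (mnm T) = ext_scale (wsign {(i,j)} T) (mnm (insert (i,j) T))"
      using insert h by (intro wedge_Psi_mnm) auto
    then have "ext_scale (wsign {(i,j)} T) (wedge (Psi i j) (mnm T)) = mnm (insert h T)"
      using h by (simp add: fun_eq_iff mult.assoc[symmetric] wsign_sq)
    moreover have "wedge (Psi i j) (mnm T) \<in> G N (Suc (card T))"
      using insert ij by (intro good_mult[OF N] lin_Psi) auto
    then have "ext_scale (wsign {(i,j)} T) (wedge (Psi i j) (mnm T)) \<in> G N (Suc (card T))"
      by (rule E.subspace_scale[OF G_subspace])
    moreover have "card (insert h T) = Suc (card T)" using insert(1,2) by simp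
    ultimately show ?case by simp
  qed
qed

lemma Lam_deg_G: assumes N: "N > 0" and f: "f \<in> Lam_deg N R" shows "f \<in> G N R"
proof -
  have "(\<Sum>S\<in>{S. S \<subseteq> gens N \<and> card S = R}. ext_scale (f S) (mnm S)) \<in> G N R"
    by (intro E.subspace_sum[OF G_subspace] E.subspace_scale[OF G_subspace]) (auto dest: mnm_G[OF N])
  then show ?thesis using Lam_deg_expand[OF f] by simp
qed

definition dd :: "gen \<Rightarrow> ext \<Rightarrow> ext" where
  "dd d f = (\<lambda>U. if d \<in> U then 0 else wsign {d} U * f (insert d U))"

definition iota :: "nat \<Rightarrow> ext \<Rightarrow> ext" where
  "iota N f = (\<Sum>i<N. ext_scale (1 / complex_of_real (sqrt (real N))) (dd (i,i) f))"

lemma dd_hom: "module_hom ext_scale ext_scale (dd d)"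
  by unfold_locales (auto simp: dd_def fun_eq_iff algebra_simps)

lemma iota_hom: "module_hom ext_scale ext_scale (iota N)"
proof -
  interpret dd: module_hom ext_scale ext_scale "dd d" for d by (rule dd_hom)
  show ?thesis
    by unfold_locales (auto simp: iota_def dd.add dd.scale sum.distrib E.scale_sum_right
        E.scale_right_distrib E.scale_scale mult.commute)
qed

lemma fsupp_dd: "fsupp f \<Longrightarrow> fsupp (dd d f)" by (auto simp: fsupp_def dd_def)
lemma fsupp_sum: "(\<And>i. i \<in> I \<Longrightarrow> fsupp (F i)) \<Longrightarrow> fsupp (\<Sum>i\<in>I. F i)"
  using E.subspace_sum[OF fsupp_subspace, of I F] by auto
lemma fsupp_iota: "fsupp f \<Longrightarrow> fsupp (iota N f)"
  unfolding iota_def by (intro fsupp_sum) (auto simp: fsupp_def dd_def)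

lemma sign_swap2:
  assumes "finite T" "d \<notin> T" "h \<notin> T" "d \<noteq> h"
  shows "wsign {d} (insert h T) * wsign {h} (insert d T) = - (wsign {h} T * wsign {d} T)"
proof -
  have a: "wsign {d} ({h} \<union> T) = wsign {d} {h} * wsign {d} T"
    using assms by (intro wsign_Un_right) auto
  have b: "wsign {h} ({d} \<union> T) = wsign {h} {d} * wsign {h} T"
    using assms by (intro wsign_Un_right) auto
  have c: "wsign {d} {h} * wsign {h} {d} = -1"
    using wsign_swap[of "{d}" "{h}"] assms by simp
  have "wsign {d} (insert h T) * wsign {h} (insert d T) = (wsign {d} {h} * wsign {h} {d}) * (wsign {h} T * wsign {d} T)"
    using a b by (simp add: algebra_simps)
  also have "\<dots> = - (wsign {h} T * wsign {d} T)" using c by simp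
  finally show ?thesis .
qed

lemma dd_wedge_Psi:
  assumes f: "fsupp f"
  shows "dd d (wedge (Psi i j) f) = (if d = (i,j) then f else 0) - wedge (Psi i j) (dd d f)"
proof (rule ext)
  fix U :: "gen set"
  define h where "h = (i,j)"
  show "dd d (wedge (Psi i j) f) U = ((if d = (i,j) then f else 0) - wedge (Psi i j) (dd d f)) U"
  proof (cases "finite U")
    case False
    then show ?thesis using f by (auto simp: dd_def wedge_Psi_apply fsupp_def)
  next
    case fin: True
    show ?thesis
    proof (cases "d = h")
      case True
      show ?thesis
      proof (cases "d \<in> U")
        case True
        have "insert d (U - {d}) = U" using True by auto
        then show ?thesis using True fin \<open>d = h\<close>
          by (simp add: dd_def wedge_Psi_apply h_def mult.assoc[symmetric] wsign_sq)
      next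
        case False
        have "insert d U - {d} = U" using False by auto
        then show ?thesis using False fin \<open>d = h\<close>
          by (simp add: dd_def wedge_Psi_apply h_def mult.assoc[symmetric] wsign_sq)
      qed
    next
      case dh: False
      show ?thesis
      proof (cases "d \<in> U")
        case True
        then show ?thesis using fin dh by (simp add: dd_def wedge_Psi_apply h_def)
      next
        case dU: False
        show ?thesis
        proof (cases "h \<in> U")
          case False
          then show ?thesis using fin dh dU by (simp add: dd_def wedge_Psi_apply h_def)
        next
          case hU: True
          define T where "T = U - {h}"
          have U: "U = insert h T" "h \<notin> T" "d \<notin> T" "finite T" using hU dU fin by (auto simp: T_def)
          have e: "insert d U - {h} = insert d T" using U dh by auto
          have s: "wsign {d} U * wsign {h} (insert d T) = - (wsign {h} T * wsign {d} T)"
            using sign_swap2[OF U(4,3,2) dh] U(1) by simp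
          have "dd d (wedge (Psi i j) f) U = wsign {d} U * (wsign {h} (insert d T) * f (insert d T))"
            using fin dU dh e hU by (simp add: dd_def wedge_Psi_apply h_def[symmetric])
          also have "\<dots> = - (wsign {h} T * (wsign {d} T * f (insert d T)))"
            using s by (simp add: algebra_simps)
          also have "\<dots> = ((if d = (i,j) then f else 0) - wedge (Psi i j) (dd d f)) U"
            using fin hU dh U(3) by (simp add: dd_def wedge_Psi_apply h_def[symmetric] T_def[symmetric])
          finally show ?thesis .
        qed
      qed
    qed
  qed
qed

lemma dd_wedge_lin:
  assumes x: "lin N x" and f: "fsupp f" and d: "d \<in> gens N"
  shows "dd d (wedge x f) = ext_scale (x {d}) f - wedge x (dd d f)"
proof -
  interpret dd: module_hom ext_scale ext_scale "dd d" by (rule dd_hom)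
  have fin: "finite (gens N)" by (simp add: gens_def)
  have "dd d (wedge x f) = (\<Sum>g\<in>gens N. ext_scale (x {g}) (dd d (wedge (Psi (fst g) (snd g)) f)))"
    by (subst lin_expand[OF x]) (simp add: wedge_sum_left wedge_scale_left dd.sum dd.scale)
  also have "\<dots> = (\<Sum>g\<in>gens N. ext_scale (x {g}) (if d = g then f else 0))
       - (\<Sum>g\<in>gens N. ext_scale (x {g}) (wedge (Psi (fst g) (snd g)) (dd d f)))"
    by (simp add: dd_wedge_Psi[OF f] E.scale_right_diff_distrib sum_subtractf)
  also have "(\<Sum>g\<in>gens N. ext_scale (x {g}) (if d = g then f else 0)) = ext_scale (x {d}) f"
  proof -
    have "(\<Sum>g\<in>gens N. ext_scale (x {g}) (if d = g then f else 0)) = (\<Sum>g\<in>gens N. if g = d then ext_scale (x {d}) f else 0)"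
      by (intro sum.cong) auto
    also have "\<dots> = ext_scale (x {d}) f" using fin d by simp
    finally show ?thesis .
  qed
  also have "(\<Sum>g\<in>gens N. ext_scale (x {g}) (wedge (Psi (fst g) (snd g)) (dd d f))) = wedge x (dd d f)"
    by (subst (2) lin_expand[OF x]) (simp add: wedge_sum_left wedge_scale_left)
  finally show ?thesis .
qed

lemma iota_wedge_lin:
  assumes x: "lin N x" and f: "fsupp f"
  shows "iota N (wedge x f) = ext_scale (ell N x) f - wedge x (iota N f)"
proof -
  define k where "k = 1 / complex_of_real (sqrt (real N))"
  have "iota N (wedge x f) = (\<Sum>i<N. ext_scale k (ext_scale (x {(i,i)}) f - wedge x (dd (i,i) f)))"
    unfolding iota_def k_def by (intro sum.cong refl) (simp add: dd_wedge_lin[OF x f] gens_def)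
  also have "\<dots> = (\<Sum>i<N. ext_scale (k * x {(i,i)}) f) - wedge x (iota N f)"
    by (simp add: iota_def k_def E.scale_right_diff_distrib sum_subtractf wedge_sum_right wedge_scale_right)
  also have "(\<Sum>i<N. ext_scale (k * x {(i,i)}) f) = ext_scale (ell N x) f"
    by (simp add: E.scale_sum_left[symmetric] ell_def trl_def k_def sum_distrib_left sum_divide_distrib)
  finally show ?thesis .
qed

lemma iota_one: "iota N ext_one = 0"
proof (rule ext)
  fix U
  have "iota N ext_one U = (\<Sum>i<N. (1 / complex_of_real (sqrt (real N))) * dd (i,i) ext_one U)"
    by (simp add: iota_def fun_sum_apply)
  also have "\<dots> = 0" by (intro sum.neutral) (simp add: dd_def ext_one_def)
  finally show "iota N ext_one U = 0 U" by simp
qed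

lemma fsupp_one: "fsupp ext_one" by (simp add: fsupp_def ext_one_def)

lemma wedge_list_fsupp: "fsupp (wedge_list fs)"
  by (cases fs) (simp_all add: fsupp_one)

lemma ell_sl: "w \<in> sl_lin N \<Longrightarrow> ell N w = 0" by (simp add: sl_lin_iff ell_def)

lemma wedge_list_iota: "set fs \<subseteq> sl_lin N \<Longrightarrow> iota N (wedge_list fs) = 0"
proof (induction fs)
  case Nil then show ?case by (simp add: iota_one)
next
  case (Cons w fs)
  then have w: "w \<in> sl_lin N" by simp
  have IH: "iota N (wedge_list fs) = 0" by (rule Cons.IH) (use Cons.prems in simp)
  show ?case
    by (simp only: wedge_list.simps iota_wedge_lin[OF sl_lin_lin[OF w] wedge_list_fsupp] ell_sl[OF w]
        IH E.scale_zero_left wedge_zero_right diff_zero)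
qed

lemma D_iota: assumes "a \<in> sl_deg N R" shows "iota N a = 0"
proof -
  interpret io: module_hom ext_scale ext_scale "iota N" by (rule iota_hom)
  have "sl_deg N R \<subseteq> {x. iota N x = 0}"
    unfolding sl_deg_eq by (rule E.span_minimal) (auto simp: gD_def wedge_list_iota io.subspace_kernel)
  then show ?thesis using assms by auto
qed

lemma Dp_iota: assumes "b \<in> Dp N R" shows "iota N b = 0 \<and> fsupp b"
proof (cases "R = 0")
  case True
  interpret io: module_hom ext_scale ext_scale "iota N" by (rule iota_hom)
  have "b = 0" using True assms by (simp add: Dp_def)
  then show ?thesis by (simp add: fsupp_def)
next
  case False
  then have "b \<in> sl_deg N (R - 1)" using assms by (simp add: Dp_def)
  then show ?thesis using D_iota D_fsupp by blast
qed

lemma iota_chi: assumes N: "N > 0" and b: "fsupp b" "iota N b = 0"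
  shows "iota N (wedge (chi N) b) = b"
  using iota_wedge_lin[OF lin_chi b(1), of N] b(2) ell_chi[OF N] by (simp add: ext_scale_1)

lemma decomp_unique:
  assumes N: "N > 0" and a: "a \<in> sl_deg N R" "a' \<in> sl_deg N R" and b: "b \<in> Dp N R" "b' \<in> Dp N R"
    and eq: "a + wedge (chi N) b = a' + wedge (chi N) b'"
  shows "a = a' \<and> b = b'"
proof -
  interpret io: module_hom ext_scale ext_scale "iota N" by (rule iota_hom)
  have "iota N (a + wedge (chi N) b) = b"
    using D_iota[OF a(1)] iota_chi[OF N] Dp_iota[OF b(1)] by (simp add: io.add)
  moreover have "iota N (a' + wedge (chi N) b') = b'"
    using D_iota[OF a(2)] iota_chi[OF N] Dp_iota[OF b(2)] by (simp add: io.add)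
  ultimately have "b = b'" using eq by simp
  then show ?thesis using eq by simp
qed

lemma decomp_exists:
  assumes N: "N > 0" and f: "f \<in> Lam_deg N R"
  shows "\<exists>a b. a \<in> sl_deg N R \<and> b \<in> Dp N R \<and> f = a + wedge (chi N) b"
  using Lam_deg_G[OF N f] by (auto simp: G_def)

definition MB :: "nat \<Rightarrow> ext set" where "MB N = mnm ` Pow (gens N)"

lemma finite_MB: "finite (MB N)" by (simp add: MB_def gens_def)

lemma Lam_span_MB: "Lam N \<subseteq> E.span (MB N)"
proof
  fix f assume f: "f \<in> Lam N"
  have "(\<Sum>S\<in>Pow (gens N). ext_scale (f S) (mnm S)) \<in> E.span (MB N)"
    by (intro E.span_sum E.span_scale E.span_base) (auto simp: MB_def)
  then show "f \<in> E.span (MB N)" using Lam_expand[OF f] by simp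
qed

lemma fin_basis:
  assumes "X \<subseteq> Lam N"
  obtains B where "B \<subseteq> X" "E.independent B" "X \<subseteq> E.span B" "finite B" "card B = E.dim X"
proof -
  obtain B where B: "B \<subseteq> X" "E.independent B" "X \<subseteq> E.span B"
    by (rule E.maximal_independent_subset)
  have "finite B" using E.independent_span_bound[OF finite_MB B(2)] B(1) assms Lam_span_MB by blast
  moreover have "card B = E.dim X" using E.basis_card_eq_dim[OF B(1,3,2)] .
  ultimately show ?thesis using B that by blast
qed

lemma dim_mono_Lam:
  assumes "X \<subseteq> Y" "Y \<subseteq> Lam N"
  shows "E.dim X \<le> E.dim Y"
proof -
  obtain BX where BX: "BX \<subseteq> X" "E.independent BX" "X \<subseteq> E.span BX" "finite BX" "card BX = E.dim X"
    using fin_basis assms by (metis order_trans)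
  obtain BY where BY: "BY \<subseteq> Y" "E.independent BY" "Y \<subseteq> E.span BY" "finite BY" "card BY = E.dim Y"
    using fin_basis assms by metis
  have "BX \<subseteq> E.span BY" using BX(1) assms(1) BY(3) by blast
  then have "card BX \<le> card BY" using E.independent_span_bound[OF BY(4) BX(2)] by blast
  then show ?thesis using BX(5) BY(5) by simp
qed

lemma dim_zero: "E.dim {0} = 0"
proof -
  have "E.dim (E.span {}) = card ({}::ext set)" by (rule E.dim_span_eq_card_independent[OF E.independent_empty])
  then show ?thesis by simp
qed

definition Phi :: "nat \<Rightarrow> ext set \<Rightarrow> ext set \<Rightarrow> ext set" where
  "Phi N X Y = {a + wedge (chi N) b | a b. a \<in> X \<and> b \<in> Y}"

lemma indep_sum_zero:
  assumes "E.independent B" "finite B" "(\<Sum>x\<in>B. ext_scale (u x) x) = 0" "x \<in> B"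
  shows "u x = 0"
  using assms unfolding E.independent_explicit_finite_subsets by blast

lemma dim_Phi:
  assumes N: "N > 0" and X: "E.subspace X" "X \<subseteq> sl_deg N R"
    and Y: "E.subspace Y" "Y \<subseteq> Dp N R"
  shows "E.dim (Phi N X Y) = E.dim X + E.dim Y"
proof -
  interpret g: module_hom ext_scale ext_scale "wedge (chi N)" by (rule E_module_hom_wedge_right)
  have XL: "X \<subseteq> Lam N" using X(2) D_Lam by blast
  have YL: "Y \<subseteq> Lam N"
  proof
    fix y assume "y \<in> Y"
    then have "y \<in> Dp N R" using Y(2) by blast
    show "y \<in> Lam N"
    proof (cases "R = 0")
      case True then show ?thesis using \<open>y \<in> Dp N R\<close> by (simp add: Dp_def Lam_def)
    next
      case False then have "y \<in> sl_deg N (R - 1)" using \<open>y \<in> Dp N R\<close> by (simp add: Dp_def)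
      then show ?thesis by (rule D_Lam)
    qed
  qed
  obtain BX where BX: "BX \<subseteq> X" "E.independent BX" "X \<subseteq> E.span BX" "finite BX" "card BX = E.dim X"
    using fin_basis[OF XL] by metis
  obtain BY where BY: "BY \<subseteq> Y" "E.independent BY" "Y \<subseteq> E.span BY" "finite BY" "card BY = E.dim Y"
    using fin_basis[OF YL] by metis
  define g where "g = wedge (chi N)"
  have iY: "\<And>y. y \<in> Y \<Longrightarrow> iota N (g y) = y"
    unfolding g_def using Y(2) Dp_iota iota_chi[OF N] by blast
  have iX: "\<And>x. x \<in> X \<Longrightarrow> iota N x = 0" using X(2) D_iota by blast
  have inj: "inj_on g Y" by (metis iY inj_onI)
  have injB: "inj_on g BY" using inj BY(1) inj_on_subset by blast
  have disj: "BX \<inter> g ` BY = {}"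
  proof (rule ccontr)
    assume "BX \<inter> g ` BY \<noteq> {}"
    then obtain y where y: "y \<in> BY" "g y \<in> BX" by blast
    have "y \<in> Y" "g y \<in> X" using y BX(1) BY(1) by auto
    then have "y = 0" using iY[of y] iX[of "g y"] by simp
    then show False using y(1) BY(2) E.dependent_zero by blast
  qed
  define B where "B = BX \<union> g ` BY"
  have finB: "finite B" using BX(4) BY(4) by (simp add: B_def)
  have sub: "B \<subseteq> Phi N X Y"
  proof
    fix z assume "z \<in> B"
    then consider "z \<in> BX" | y where "y \<in> BY" "z = g y" by (auto simp: B_def)
    then show "z \<in> Phi N X Y"
    proof cases
      case 1 then show ?thesis unfolding Phi_def using BX(1) E.subspace_0[OF Y(1)]
        by (intro CollectI exI[of _ z] exI[of _ 0]) auto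
    next
      case 2 then show ?thesis unfolding Phi_def using BY(1) E.subspace_0[OF X(1)]
        by (intro CollectI exI[of _ 0] exI[of _ y]) (auto simp: g_def)
    qed
  qed
  have spn: "Phi N X Y \<subseteq> E.span B"
  proof
    fix z assume "z \<in> Phi N X Y"
    then obtain a b where z: "z = a + g b" "a \<in> X" "b \<in> Y" by (auto simp: Phi_def g_def)
    have "a \<in> E.span B" using z(2) BX(3) E.span_mono[of BX B] by (auto simp: B_def)
    moreover have "g b \<in> E.span B"
    proof -
      have "g b \<in> g ` E.span BY" using z(3) BY(3) by blast
      also have "g ` E.span BY = E.span (g ` BY)" unfolding g_def by (rule g.span_image[symmetric])
      also have "\<dots> \<subseteq> E.span B" by (rule E.span_mono) (auto simp: B_def)
      finally show ?thesis .
    qed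
    ultimately show "z \<in> E.span B" using z(1) E.span_add by blast
  qed
  have ind: "E.independent B"
  proof (rule E.independent_if_scalars_zero[OF finB])
    fix u z assume sum0: "(\<Sum>x\<in>B. ext_scale (u x) x) = 0" and zB: "z \<in> B"
    define sX where "sX = (\<Sum>x\<in>BX. ext_scale (u x) x)"
    define sY where "sY = (\<Sum>y\<in>BY. ext_scale (u (g y)) y)"
    have "(\<Sum>x\<in>B. ext_scale (u x) x) = sX + (\<Sum>x\<in>g ` BY. ext_scale (u x) x)"
      unfolding B_def sX_def using BX(4) BY(4) disj by (simp add: sum.union_disjoint)
    also have "(\<Sum>x\<in>g ` BY. ext_scale (u x) x) = (\<Sum>y\<in>BY. ext_scale (u (g y)) (g y))"
      by (rule sum.reindex[OF injB, unfolded comp_def])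
    also have "\<dots> = g sY" unfolding sY_def g_def by (simp add: g.sum g.scale)
    finally have calc: "(\<Sum>x\<in>B. ext_scale (u x) x) = sX + g sY" .
    have e0: "sX + g sY = 0" by (simp only: calc[symmetric] sum0)
    have e: "sX + wedge (chi N) sY = 0 + wedge (chi N) 0"
      using e0 unfolding g_def by (simp only: wedge_zero_right add_0_left)
    have sXX: "sX \<in> X" unfolding sX_def using BX(1)
      by (intro E.subspace_sum[OF X(1)] E.subspace_scale[OF X(1)]) auto
    have sYY: "sY \<in> Y" unfolding sY_def using BY(1)
      by (intro E.subspace_sum[OF Y(1)] E.subspace_scale[OF Y(1)]) auto
    have "sX = 0 \<and> sY = 0"
      using decomp_unique[OF N _ _ _ _ e, of R] sXX sYY X(2) Y(2)
        E.subspace_0[OF D_subspace] E.subspace_0[OF Dp_subspace] by blast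
    then have s0: "sX = 0" "sY = 0" by auto
    from zB consider "z \<in> BX" | y where "y \<in> BY" "z = g y" by (auto simp: B_def)
    then show "u z = 0"
    proof cases
      case 1 then show ?thesis using indep_sum_zero[OF BX(2,4)] s0(1) by (simp add: sX_def)
    next
      case 2 then show ?thesis using indep_sum_zero[OF BY(2,4), of "\<lambda>y. u (g y)"] s0(2) by (simp add: sY_def)
    qed
  qed
  have "card B = card BX + card BY"
    unfolding B_def using BX(4) BY(4) disj by (simp add: card_Un_disjoint card_image[OF injB])
  moreover have "card B = E.dim (Phi N X Y)" by (rule E.basis_card_eq_dim[OF sub spn ind])
  ultimately show ?thesis using BX(5) BY(5) by simp
qed

lemma trl_Psi: "trl N (Psi i j) = (if i = j \<and> i < N then 1 else 0)"
proof -
  have "trl N (Psi i j) = (\<Sum>k<N. if k = i \<and> i = j then 1 else 0)"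
    unfolding trl_def by (intro sum.cong) (auto simp: Psi_def)
  also have "\<dots> = (if i = j \<and> i < N then 1 else 0)"
    by (cases "i = j") simp_all
  finally show ?thesis .
qed

lemma trl_cc: "N > 0 \<Longrightarrow> trl N (cc N) = 1"
  by (simp add: cc_def trl_scale trl_chi)

lemma Amat_sl: assumes N: "N > 0" and ij: "i < N" "j < N" shows "Amat N i j \<in> sl_lin N"
  unfolding sl_lin_iff
proof
  have lc: "lin N (cc N)" unfolding cc_def by (intro lin_scale lin_chi)
  show "lin N (Amat N i j)" unfolding Amat_eq using lin_Psi[OF ij] lc by (auto intro: lin_diff)
  show "trl N (Amat N i j) = 0" unfolding Amat_eq using ij trl_cc[OF N] by (simp add: trl_diff trl_Psi)
qed

lemma D_right: assumes "a \<in> sl_deg N n" "w \<in> sl_lin N" shows "wedge a w \<in> sl_deg N (Suc n)"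
proof -
  have "wedge a w = ext_scale ((-1)^n) (wedge w a)"
    by (rule wedge_comm1[OF D_hom[OF assms(1)] lin_hom[OF sl_lin_lin[OF assms(2)]]])
  then show ?thesis using D_left[OF assms(2,1)] E.subspace_scale[OF D_subspace] by simp
qed

lemma Amat_pow_D: assumes N: "N > 0"
  shows "i < N \<Longrightarrow> j < N \<Longrightarrow> mpow N (Amat N) n i j \<in> sl_deg N n"
proof (induction n arbitrary: i j)
  case 0 then show ?case using one_D E.subspace_0[OF D_subspace] by (simp add: mid_def ext_zero_eq)
next
  case (Suc n)
  show ?case unfolding mpow.simps mmul_eq
    using Suc by (intro E.subspace_sum[OF D_subspace] D_right Amat_sl[OF N]) auto
qed

lemma TrA_D: assumes N: "N > 0" shows "TrA N p \<in> sl_deg N p"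
  unfolding TrA_def mtrace_def ext_sum_eq
  by (intro E.subspace_sum[OF D_subspace] Amat_pow_D[OF N]) auto

lemma D_mult: assumes a: "a \<in> sl_deg N m" and g: "g \<in> sl_deg N n"
  shows "wedge a g \<in> sl_deg N (m + n)"
proof -
  have gl: "set fs \<subseteq> sl_lin N \<Longrightarrow> wedge (wedge_list fs) g \<in> sl_deg N (length fs + n)" for fs
  proof (induction fs)
    case Nil then show ?case using g D_fsupp by (simp add: wedge_one_left)
  next
    case (Cons w fs)
    then show ?case using D_left[of w N "wedge (wedge_list fs) g"] by (simp add: wedge_assoc)
  qed
  interpret lw: module_hom ext_scale ext_scale "\<lambda>a. wedge a g" by (rule E_module_hom_wedge_left)
  have "sl_deg N m \<subseteq> (\<lambda>a. wedge a g) -` sl_deg N (m + n)"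
    unfolding sl_deg_eq[of N m]
    by (rule E.span_minimal) (auto simp: gD_def gl lw.subspace_vimage sl_deg_eq[symmetric] D_subspace)
  then show ?thesis using a by blast
qed

lemma tau_tau: assumes N: "N > 0" and p: "odd p" shows "wedge (TrA N p) (TrA N p) = 0"
  by (rule wedge_self_odd[OF D_hom[OF TrA_D[OF N]] p])

lemma tau_chi: assumes N: "N > 0" and p: "odd p"
  shows "wedge (TrA N p) (wedge (chi N) b) = - wedge (chi N) (wedge (TrA N p) b)"
proof -
  have "wedge (TrA N p) (wedge (chi N) b) = wedge (wedge (TrA N p) (chi N)) b" by (simp add: wedge_assoc)
  also have "wedge (TrA N p) (chi N) = ext_scale ((-1)^p) (wedge (chi N) (TrA N p))"
    by (rule wedge_comm1[OF D_hom[OF TrA_D[OF N]] hom_chi])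
  also have "ext_scale ((-1)^p) (wedge (chi N) (TrA N p)) = - wedge (chi N) (TrA N p)"
    using p by (simp add: ext_scale_m1)
  finally show ?thesis by (simp only: wedge_uminus_left wedge_assoc)
qed

lemma Lam_deg_iff: "f \<in> Lam_deg N R \<longleftrightarrow> f \<in> Lam N \<and> hom R f"
proof -
  have "finite S" if "S \<subseteq> gens N" for S using that finite_subset by (auto simp: gens_def)
  then show ?thesis by (auto simp: Lam_deg_def hom_def Lam_def)
qed

lemma Lam_deg_subspace: "E.subspace (Lam_deg N R)"
proof -
  have "Lam_deg N R = Lam N \<inter> {f. hom R f}" using Lam_deg_iff by blast
  then show ?thesis using E.subspace_inter Lam_subspace hom_subspace by metis
qed

lemma chi_Dp: assumes "b \<in> Dp N R" shows "wedge (chi N) b \<in> Lam_deg N R"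
proof (cases "R = 0")
  case True then show ?thesis using assms E.subspace_0[OF Lam_deg_subspace] by (simp add: Dp_def)
next
  case False
  then have b: "b \<in> sl_deg N (R - 1)" using assms by (simp add: Dp_def)
  have "hom (1 + (R - 1)) (wedge (chi N) b)" by (rule wedge_hom[OF hom_chi D_hom[OF b]])
  moreover have "wedge (chi N) b \<in> Lam N" by (rule wedge_Lam[OF lin_Lam[OF lin_chi] D_Lam[OF b]])
  ultimately show ?thesis using False by (simp add: Lam_deg_iff)
qed

lemma tau_Dp: assumes N: "N > 0" and b: "b \<in> Dp N R" shows "wedge (TrA N p) b \<in> Dp N (R + p)"
proof (cases "R = 0")
  case True then show ?thesis using b E.subspace_0[OF Dp_subspace] by (simp add: Dp_def)
next
  case False
  then have "b \<in> sl_deg N (R - 1)" using b by (simp add: Dp_def)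
  then have "wedge (TrA N p) b \<in> sl_deg N (p + (R - 1))" by (rule D_mult[OF TrA_D[OF N]])
  moreover have "p + (R - 1) = R + p - 1" using False by simp
  ultimately show ?thesis using False by (simp add: Dp_def)
qed

lemma KC_eq:
  assumes N: "N > 0" and p: "odd p"
  shows "{v \<in> Lam_deg N R. wedge (TrA N p) v = 0}
       = Phi N {v \<in> sl_deg N R. wedge (TrA N p) v = 0} {v \<in> Dp N R. wedge (TrA N p) v = 0}"
  (is "?L = ?R")
proof
  show "?L \<subseteq> ?R"
  proof
    fix v assume v: "v \<in> ?L"
    then obtain a b where a: "a \<in> sl_deg N R" and b: "b \<in> Dp N R" and vab: "v = a + wedge (chi N) b"
      using decomp_exists[OF N] by blast
    have "wedge (TrA N p) v = wedge (TrA N p) a + wedge (chi N) (- wedge (TrA N p) b)"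
      unfolding vab by (simp add: wedge_add_right tau_chi[OF N p] wedge_uminus_right)
    then have e: "wedge (TrA N p) a + wedge (chi N) (- wedge (TrA N p) b) = 0 + wedge (chi N) 0"
      using v by simp
    have "wedge (TrA N p) a = 0 \<and> - wedge (TrA N p) b = 0"
    proof (rule decomp_unique[OF N _ _ _ _ e])
      show "wedge (TrA N p) a \<in> sl_deg N (R + p)" using D_mult[OF TrA_D[OF N, of p] a] by (simp add: add.commute)
      show "0 \<in> sl_deg N (R + p)" by (rule E.subspace_0[OF D_subspace])
      show "- wedge (TrA N p) b \<in> Dp N (R + p)" by (rule E.subspace_neg[OF Dp_subspace tau_Dp[OF N b]])
      show "0 \<in> Dp N (R + p)" by (rule E.subspace_0[OF Dp_subspace])
    qed
    then show "v \<in> ?R" unfolding Phi_def using a b vab by auto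
  qed
next
  show "?R \<subseteq> ?L"
  proof
    fix v assume "v \<in> ?R"
    then obtain a b where a: "a \<in> sl_deg N R" "wedge (TrA N p) a = 0" and b: "b \<in> Dp N R" "wedge (TrA N p) b = 0"
      and vab: "v = a + wedge (chi N) b" by (auto simp: Phi_def)
    have "v \<in> Lam_deg N R" unfolding vab
      by (rule E.subspace_add[OF Lam_deg_subspace D_Lam_deg[OF a(1)] chi_Dp[OF b(1)]])
    moreover have "wedge (TrA N p) v = 0"
      unfolding vab by (simp add: wedge_add_right tau_chi[OF N p] a(2) b(2))
    ultimately show "v \<in> ?L" by simp
  qed
qed

lemma IC_eq:
  assumes N: "N > 0" and p: "odd p"
  shows "wedge (TrA N p) ` Lam_deg N m
       = Phi N (wedge (TrA N p) ` sl_deg N m) (wedge (TrA N p) ` Dp N m)"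
  (is "?L = ?R")
proof
  show "?L \<subseteq> ?R"
  proof
    fix z assume "z \<in> ?L"
    then obtain v where v: "v \<in> Lam_deg N m" "z = wedge (TrA N p) v" by blast
    then obtain a b where a: "a \<in> sl_deg N m" and b: "b \<in> Dp N m" and vab: "v = a + wedge (chi N) b"
      using decomp_exists[OF N] by blast
    have "z = wedge (TrA N p) a + wedge (chi N) (wedge (TrA N p) (- b))"
      unfolding v(2) vab by (simp add: wedge_add_right tau_chi[OF N p] wedge_uminus_right)
    moreover have "- b \<in> Dp N m" by (rule E.subspace_neg[OF Dp_subspace b])
    ultimately show "z \<in> ?R" unfolding Phi_def using a by blast
  qed
next
  show "?R \<subseteq> ?L"
  proof
    fix z assume "z \<in> ?R"
    then obtain a b where a: "a \<in> sl_deg N m" and b: "b \<in> Dp N m"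
      and z: "z = wedge (TrA N p) a + wedge (chi N) (wedge (TrA N p) b)" by (auto simp: Phi_def)
    have "a + wedge (chi N) (- b) \<in> Lam_deg N m"
      by (rule E.subspace_add[OF Lam_deg_subspace D_Lam_deg[OF a] chi_Dp[OF E.subspace_neg[OF Dp_subspace b]]])
    moreover have "z = wedge (TrA N p) (a + wedge (chi N) (- b))"
      unfolding z by (simp add: wedge_add_right wedge_diff_right tau_chi[OF N p] wedge_uminus_right)
    ultimately show "z \<in> ?L" by blast
  qed
qed

lemma h_rel:
  assumes N: "N > 0" and p3: "p \<ge> 3" and p: "odd p"
  shows "h_BPS N p R = h_red N p R + (if R = 0 then 0 else h_red N p (R - 1))"
proof -
  define \<tau> where "\<tau> = TrA N p"
  interpret tw: module_hom ext_scale ext_scale "wedge \<tau>" by (rule E_module_hom_wedge_right)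
  define K where "K = (\<lambda>R. {v \<in> sl_deg N R. wedge \<tau> v = 0})"
  define Kp where "Kp = (\<lambda>R. {v \<in> Dp N R. wedge \<tau> v = 0})"
  define T where "T = (\<lambda>m. wedge \<tau> ` sl_deg N m)"
  define Tp where "Tp = (\<lambda>m. wedge \<tau> ` Dp N m)"
  define k where "k = (\<lambda>R. cdim (K R))"
  define i where "i = (\<lambda>R. if R < p then 0 else cdim (T (R - p)))"
  have hred: "h_red N p R' = k R' - i R'" for R'
    by (simp add: h_red_def coh_dim_def ext_zero_eq k_def i_def K_def T_def \<tau>_def)
  have hbps: "h_BPS N p R = cdim {v \<in> Lam_deg N R. wedge \<tau> v = 0}
      - (if R < p then 0 else cdim (wedge \<tau> ` Lam_deg N (R - p)))"
    by (simp add: h_BPS_def coh_dim_def ext_zero_eq TrPsi_eq[OF p3 p] \<tau>_def)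
  have K_sub: "E.subspace (K R')" for R'
  proof -
    have "K R' = sl_deg N R' \<inter> {v. wedge \<tau> v = 0}" by (auto simp: K_def)
    then show ?thesis using E.subspace_inter[OF D_subspace tw.subspace_kernel] by simp
  qed
  have Kp_sub: "E.subspace (Kp R')" for R'
  proof -
    have "Kp R' = Dp N R' \<inter> {v. wedge \<tau> v = 0}" by (auto simp: Kp_def)
    then show ?thesis using E.subspace_inter[OF Dp_subspace tw.subspace_kernel] by simp
  qed
  have T_sub: "E.subspace (T m)" for m unfolding T_def by (rule tw.subspace_image[OF D_subspace])
  have Tp_sub: "E.subspace (Tp m)" for m unfolding Tp_def by (rule tw.subspace_image[OF Dp_subspace])
  have dimKp: "cdim (Kp R') = (if R' = 0 then 0 else k (R' - 1))" for R'
  proof (cases "R' = 0")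
    case True
    then have "Kp R' = {0}" by (auto simp: Kp_def Dp_def)
    then show ?thesis using True by (simp add: cdim_def dim_zero)
  next
    case False
    then have "Kp R' = K (R' - 1)" by (simp add: Kp_def K_def Dp_def)
    then show ?thesis using False by (simp add: k_def)
  qed
  have dimKC: "cdim {v \<in> Lam_deg N R. wedge \<tau> v = 0} = k R + cdim (Kp R)"
    unfolding cdim_def \<tau>_def KC_eq[OF N p] k_def K_def Kp_def
    by (rule dim_Phi[OF N]) (use K_sub Kp_sub in \<open>auto simp: K_def Kp_def \<tau>_def cdim_def\<close>)
  have dimIC: "cdim (wedge \<tau> ` Lam_deg N (R - p)) = cdim (T (R - p)) + cdim (Tp (R - p))" if "R \<ge> p"
  proof -
    have s1: "T (R - p) \<subseteq> sl_deg N R"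
    proof
      fix z assume "z \<in> T (R - p)"
      then obtain a where a: "a \<in> sl_deg N (R - p)" "z = wedge \<tau> a" by (auto simp: T_def)
      have "p + (R - p) = R" using that by simp
      then show "z \<in> sl_deg N R" using D_mult[OF TrA_D[OF N, of p] a(1)] a(2) by (simp add: \<tau>_def)
    qed
    have s2: "Tp (R - p) \<subseteq> Dp N R"
      using tau_Dp[OF N, of _ "R - p" p] that by (auto simp: Tp_def \<tau>_def)
    show ?thesis
      unfolding cdim_def \<tau>_def IC_eq[OF N p] T_def Tp_def
      by (rule dim_Phi[OF N]) (use T_sub Tp_sub s1 s2 in \<open>auto simp: T_def Tp_def \<tau>_def\<close>)
  qed
  have dimTp: "cdim (Tp m) = (if m = 0 then 0 else cdim (T (m - 1)))" for m
  proof (cases "m = 0")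
    case True
    then have "Tp m = {0}" by (auto simp: Tp_def Dp_def)
    then show ?thesis using True by (simp add: cdim_def dim_zero)
  next
    case False then show ?thesis by (simp add: Tp_def T_def Dp_def)
  qed
  have ik: "i R' \<le> k R'" for R'
  proof (cases "R' < p")
    case False
    have "T (R' - p) \<subseteq> K R'"
    proof
      fix z assume "z \<in> T (R' - p)"
      then obtain a where a: "a \<in> sl_deg N (R' - p)" "z = wedge \<tau> a" by (auto simp: T_def)
      have "z \<in> sl_deg N R'" using D_mult[OF TrA_D[OF N, of p] a(1)] False a(2) by (simp add: \<tau>_def)
      moreover have "wedge \<tau> z = 0" unfolding a(2) \<tau>_def
        by (simp add: wedge_assoc[symmetric] tau_tau[OF N p])
      ultimately show "z \<in> K R'" by (simp add: K_def)
    qed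
    moreover have "K R' \<subseteq> Lam N" using D_Lam by (auto simp: K_def)
    ultimately have "cdim (T (R' - p)) \<le> cdim (K R')" unfolding cdim_def by (rule dim_mono_Lam)
    then show ?thesis using False by (simp add: i_def k_def)
  qed (simp add: i_def)
  show ?thesis
  proof (cases "R < p")
    case True
    then have "h_BPS N p R = k R + (if R = 0 then 0 else k (R - 1))"
      using hbps dimKC dimKp by simp
    moreover have "i R = 0" "R \<noteq> 0 \<Longrightarrow> i (R - 1) = 0" using True by (auto simp: i_def)
    ultimately show ?thesis using hred by simp
  next
    case False
    then have R0: "R \<noteq> 0" using p3 by auto
    have iR: "i R = cdim (T (R - p))" using False by (simp add: i_def)
    have iR1: "cdim (Tp (R - p)) = i (R - 1)"
    proof (cases "R = p")
      case True then show ?thesis using dimTp p3 by (simp add: i_def)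
    next
      case False
      then have "R - p \<noteq> 0" "\<not> R - 1 < p" "R - p - 1 = R - 1 - p" using \<open>\<not> R < p\<close> by auto
      then show ?thesis using dimTp by (simp add: i_def)
    qed
    have "h_BPS N p R = (k R + k (R - 1)) - (i R + i (R - 1))"
      using hbps dimKC dimKp dimIC False R0 iR iR1 by simp
    then show ?thesis using hred ik[of R] ik[of "R - 1"] R0 by simp
  qed
qed

lemma Lam_deg_top: assumes "R > N * N" "f \<in> Lam_deg N R" shows "f = 0"
proof (rule ext)
  fix S
  show "f S = 0 S"
  proof (rule ccontr)
    assume "f S \<noteq> 0 S"
    then have "S \<subseteq> gens N" "card S = R" using assms(2) by (auto simp: Lam_deg_def Lam_def)
    then have "R \<le> card (gens N)" by (metis card_mono finite_SigmaI finite_atLeastLessThan gens_def)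
    then show False using assms(1) by (simp add: gens_def)
  qed
qed

lemma D_top: assumes N: "N > 0" and a: "a \<in> sl_deg N (N * N)" shows "a = 0"
proof -
  have "wedge (chi N) a \<in> Lam_deg N (Suc (N * N))" using chi_Dp[of a N "Suc (N*N)"] a by (simp add: Dp_def)
  then have z: "wedge (chi N) a = 0" by (intro Lam_deg_top) auto
  have "iota N (wedge (chi N) a) = a" by (rule iota_chi[OF N D_fsupp[OF a] D_iota[OF a]])
  then show ?thesis using z module_hom.zero[OF iota_hom] by metis
qed

lemma h_red_top: assumes N: "N > 0" shows "h_red N p (N * N) = 0"
proof -
  have "{v \<in> sl_deg N (N * N). wedge (TrA N p) v = ext_zero} = {0}"
    using D_top[OF N] E.subspace_0[OF D_subspace] by (auto simp: ext_zero_eq)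
  then show ?thesis by (simp add: h_red_def coh_dim_def cdim_def dim_zero)
qed

lemma coeff_Zsum: "coeff (\<Sum>R\<le>M. monom (c R) R) n = (if n \<le> M then c n else 0)"
  by (simp add: coeff_sum coeff_monom)

lemma poly_part:
  assumes N: "N > 0" and p3: "p \<ge> 3" and p: "odd p"
  shows "Z_BPS N p = [:1, 1:] * Z_red N p"
proof (rule poly_eqI)
  fix n
  have m: "[:1, 1:] * Z_red N p = Z_red N p + pCons 0 (Z_red N p)"
    by (simp only: mult_pCons_left smult_1_left mult_zero_left pCons_0_0 add_0_right)
  have "coeff ([:1, 1:] * Z_red N p) n = coeff (Z_red N p) n + (if n = 0 then 0 else coeff (Z_red N p) (n - 1))"
    unfolding m by (cases n) simp_all
  also have "\<dots> = coeff (Z_BPS N p) n"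
  proof -
    have top: "h_red N p (N^2) = 0" using h_red_top[OF N] by (simp add: power2_eq_square)
    show ?thesis
      unfolding Z_red_def Z_BPS_def coeff_Zsum
      using h_rel[OF N p3 p, of n] top by (cases "n = N^2 + 1") auto
  qed
  finally show "coeff (Z_BPS N p) n = coeff ([:1, 1:] * Z_red N p) n" by simp
qed

theorem mainTheorem1:
  fixes N p :: nat
  assumes "N \<ge> 2" and "p \<ge> 3" and "odd p"
  shows "TrPsi N p = TrA N p
    \<and> (\<forall>R. \<forall>f \<in> Lam_deg N R. \<exists>!ab. fst ab \<in> sl_deg N R
          \<and> snd ab \<in> (if R = 0 then {ext_zero} else sl_deg N (R - 1))
          \<and> f = ext_add (fst ab) (wedge (chi N) (snd ab)))
    \<and> Z_BPS N p = [:1, 1:] * Z_red N p"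
proof (intro conjI allI ballI)
  have N: "N > 0" using assms(1) by simp
  show "TrPsi N p = TrA N p" by (rule TrPsi_eq[OF assms(2,3)])
  show "Z_BPS N p = [:1, 1:] * Z_red N p" by (rule poly_part[OF N assms(2,3)])
  fix R f assume f: "f \<in> Lam_deg N R"
  have DpE: "(if R = 0 then {ext_zero} else sl_deg N (R - 1)) = Dp N R"
    by (simp add: Dp_def ext_zero_eq)
  obtain a b where ab: "a \<in> sl_deg N R" "b \<in> Dp N R" "f = a + wedge (chi N) b"
    using decomp_exists[OF N f] by blast
  show "\<exists>!ab. fst ab \<in> sl_deg N R
          \<and> snd ab \<in> (if R = 0 then {ext_zero} else sl_deg N (R - 1))
          \<and> f = ext_add (fst ab) (wedge (chi N) (snd ab))"
    unfolding DpE ext_add_eq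
  proof (rule ex1I[of _ "(a, b)"])
    show "fst (a, b) \<in> sl_deg N R \<and> snd (a, b) \<in> Dp N R \<and> f = fst (a, b) + wedge (chi N) (snd (a, b))"
      using ab by simp
  next
    fix y assume y: "fst y \<in> sl_deg N R \<and> snd y \<in> Dp N R \<and> f = fst y + wedge (chi N) (snd y)"
    have "fst y = a \<and> snd y = b"
      using decomp_unique[OF N, of "fst y" R a "snd y" b] y ab by simp
    then show "y = (a, b)" by (cases y) simp
  qed
qed

end
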